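(* Let $e(x)\in\boldsymbol{k}\{\{x\}\}$ be a normalized base for logarithms. Then in $\boldsymbol{k}\{\{x,y\}\}$, $$\log_e(e(x)e(y))=x+(\tau^{e(x)})^{-1}(y)+O(y^2),$$ where $O(y^2)$ denotes a series all of whose terms have degree at least $2$ in $y$.
   Context: $\boldsymbol{k}$ is a field of characteristic zero; $\boldsymbol{k}\{\{X\}\}$ is the unital algebra of formal power series in non-associative variables $X$. $\Delta,\epsilon$ are the continuous unital algebra homomorphisms with each variable $v$ primitive ($\Delta(v)=v\otimes1+1\otimes v$, $\epsilon(v)=0$); Sweedler notation $\Delta(u)=\sum u_{(1)}\otimes u_{(2)}$; left division $\backslash$ is the unique bilinear operation with $\sum u_{(1)}\backslash(u_{(2)}v)=\epsilon(u)v=\sum u_{(1)}(u_{(2)}\backslash v)$. A base for logarithms is a group-like $e(x)\in\boldsymbol{k}\{\{x\}\}$ ($\Delta e=e\otimes e$, $\epsilon(e)=1$) whose degree-one component is nonzero; it is normalized if its degree-one component equals $x$. $\log_e$ is the inverse of the bijection $u\mapsto e(u)$ from series with zero constant term to series with constant term $1$. $\tau^{e(x)}(y):=e(x)\backslash\left.\frac{d}{ds}\right|_{s=0}e(x+sy)\in\boldsymbol{k}\{\{x,y\}\}$, and $(\tau^{e(x)})^{-1}(y)$ is the series in $\boldsymbol{k}\{\{x,y\}\}$ with $(\tau^{e(x)})^{-1}(\tau^{e(x)}(y))=y$ (substitution in $y$). *)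

theory Defs
  imports Main
begin

text \<open>Non-empty non-associative monomials in variables of type 'v are binary trees
with leaves labelled by variables; a monomial (including the empty word 1) is
an option of such a tree, None being the unit 1.\<close>

datatype 'v ntree = MLeaf 'v | MNode "'v ntree" "'v ntree"

type_synonym 'v mon = "'v ntree option"

fun tdeg :: "'v ntree \<Rightarrow> nat" where
  "tdeg (MLeaf v) = 1"
| "tdeg (MNode a b) = tdeg a + tdeg b"

definition deg :: "'v mon \<Rightarrow> nat" where
  "deg m = (case m of None \<Rightarrow> 0 | Some t \<Rightarrow> tdeg t)"

fun mmul :: "'v mon \<Rightarrow> 'v mon \<Rightarrow> 'v mon" where
  "mmul None w = w"
| "mmul (Some a) None = Some a"
| "mmul (Some a) (Some b) = Some (MNode a b)"

text \<open>Formal power series k{{X}}: arbitrary coefficient functions on monomials.\<close>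
type_synonym ('v, 'a) ser = "'v mon \<Rightarrow> 'a"

definition mon :: "'v mon \<Rightarrow> ('v, 'a::zero_neq_one) ser" where
  "mon m = (\<lambda>w. if w = m then 1 else 0)"

definition var :: "'v \<Rightarrow> ('v, 'a::zero_neq_one) ser" where
  "var v = mon (Some (MLeaf v))"

definition ser_mult :: "('v, 'a::comm_ring_1) ser \<Rightarrow> ('v, 'a) ser \<Rightarrow> ('v, 'a) ser" where
  "ser_mult f g = (\<lambda>w. \<Sum>(u, v) \<in> {(u, v). mmul u v = w}. f u * g v)"

definition ser_scale :: "'a::comm_ring_1 \<Rightarrow> ('v, 'a) ser \<Rightarrow> ('v, 'a) ser" where
  "ser_scale c f = (\<lambda>w. c * f w)"

fun eval_tree :: "('v \<Rightarrow> ('w, 'a::comm_ring_1) ser) \<Rightarrow> 'v ntree \<Rightarrow> ('w, 'a) ser" where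
  "eval_tree \<sigma> (MLeaf v) = \<sigma> v"
| "eval_tree \<sigma> (MNode a b) = ser_mult (eval_tree \<sigma> a) (eval_tree \<sigma> b)"

definition eval_mon :: "('v \<Rightarrow> ('w, 'a::comm_ring_1) ser) \<Rightarrow> 'v mon \<Rightarrow> ('w, 'a) ser" where
  "eval_mon \<sigma> m = (case m of None \<Rightarrow> mon None | Some t \<Rightarrow> eval_tree \<sigma> t)"

text \<open>Substitution of series with zero constant term for the (finitely many)
variables: f(\<sigma>) = \<Sum>_m f_m m(\<sigma>), where only monomials m with deg m \<le> deg w
contribute to the coefficient of w (each \<sigma> v has zero constant term).\<close>
definition subst :: "('v::finite \<Rightarrow> ('w, 'a::comm_ring_1) ser) \<Rightarrow> ('v, 'a) ser \<Rightarrow> ('w, 'a) ser" where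
  "subst \<sigma> f = (\<lambda>w. \<Sum>m \<in> {m. deg m \<le> deg w}. f m * eval_mon \<sigma> m w)"

text \<open>Completed tensor product k{{X}} \<otimes> k{{X}}: coefficient functions on pairs.\<close>
type_synonym ('v, 'a) tser = "'v mon \<times> 'v mon \<Rightarrow> 'a"

definition tmon :: "'v mon \<Rightarrow> 'v mon \<Rightarrow> ('v, 'a::zero_neq_one) tser" where
  "tmon a b = (\<lambda>p. if p = (a, b) then 1 else 0)"

definition tensor :: "('v, 'a::comm_ring_1) ser \<Rightarrow> ('v, 'a) ser \<Rightarrow> ('v, 'a) tser" where
  "tensor f g = (\<lambda>(a, b). f a * g b)"

definition tmult :: "('v, 'a::comm_ring_1) tser \<Rightarrow> ('v, 'a) tser \<Rightarrow> ('v, 'a) tser" where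
  "tmult F G = (\<lambda>(a, b). \<Sum>((a1, a2), (b1, b2)) \<in> {(a1, a2). mmul a1 a2 = a} \<times> {(b1, b2). mmul b1 b2 = b}.
      F (a1, b1) * G (a2, b2))"

text \<open>The coproduct on monomials: the unital algebra homomorphism with each
variable primitive.\<close>
fun coprod_tree :: "'v ntree \<Rightarrow> ('v, 'a::comm_ring_1) tser" where
  "coprod_tree (MLeaf v) = (\<lambda>p. tmon (Some (MLeaf v)) None p + tmon None (Some (MLeaf v)) p)"
| "coprod_tree (MNode a b) = tmult (coprod_tree a) (coprod_tree b)"

definition coprod_mon :: "'v mon \<Rightarrow> ('v, 'a::comm_ring_1) tser" where
  "coprod_mon m = (case m of None \<Rightarrow> tmon None None | Some t \<Rightarrow> coprod_tree t)"

text \<open>Continuous extension to series (coprod_mon w is homogeneous of degree deg w).\<close>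
definition coprod :: "('v::finite, 'a::comm_ring_1) ser \<Rightarrow> ('v, 'a) tser" where
  "coprod f = (\<lambda>(a, b). \<Sum>w \<in> {w. deg w = deg a + deg b}. f w * coprod_mon w (a, b))"

text \<open>Counit: the unital algebra homomorphism killing all variables = constant term.\<close>
definition counit :: "('v, 'a) ser \<Rightarrow> 'a" where
  "counit f = f None"

definition ldiv_ok :: "('v::finite mon \<Rightarrow> 'v mon \<Rightarrow> ('v, 'a::comm_ring_1) ser) \<Rightarrow> bool" where
  "ldiv_ok D \<longleftrightarrow>
     (\<forall>u v. (\<lambda>w. \<Sum>(a, b) \<in> {(a, b). deg a + deg b = deg u}.
                 coprod_mon u (a, b) * D a (mmul b v) w)
            = ser_scale (counit (mon u)) (mon v)) \<and>
     (\<forall>u v. (\<lambda>w. \<Sum>(a, b) \<in> {(a, b). deg a + deg b = deg u}.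
                 coprod_mon u (a, b) * ser_mult (mon a) (D b v) w)
            = ser_scale (counit (mon u)) (mon v))"

definition ldiv_mon :: "'v::finite mon \<Rightarrow> 'v mon \<Rightarrow> ('v, 'a::comm_ring_1) ser" where
  "ldiv_mon = (THE D. ldiv_ok D)"

text \<open>Continuous bilinear extension to series (u \ v is homogeneous of degree
deg u + deg v).\<close>
definition ldiv :: "('v::finite, 'a::comm_ring_1) ser \<Rightarrow> ('v, 'a) ser \<Rightarrow> ('v, 'a) ser" where
  "ldiv f g = (\<lambda>w. \<Sum>(u, v) \<in> {(u, v). deg u + deg v = deg w}. f u * g v * ldiv_mon u v w)"

definition group_like :: "('v::finite, 'a::comm_ring_1) ser \<Rightarrow> bool" where
  "group_like e \<longleftrightarrow> coprod e = tensor e e \<and> counit e = 1"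

text \<open>Series in one variable x are series over the variable type unit.\<close>
definition base_for_logs :: "(unit, 'a::comm_ring_1) ser \<Rightarrow> bool" where
  "base_for_logs e \<longleftrightarrow> group_like e \<and> (\<exists>m. deg m = 1 \<and> e m \<noteq> 0)"

definition normalized_base :: "(unit, 'a::comm_ring_1) ser \<Rightarrow> bool" where
  "normalized_base e \<longleftrightarrow> base_for_logs e \<and> (\<forall>m. deg m = 1 \<longrightarrow> e m = var () m)"

text \<open>e(u) for a series u with zero constant term.\<close>
definition apply_base :: "(unit, 'a::comm_ring_1) ser \<Rightarrow> ('w, 'a) ser \<Rightarrow> ('w, 'a) ser" where
  "apply_base e u = subst (\<lambda>_. u) e"

definition log_base :: "(unit, 'a::comm_ring_1) ser \<Rightarrow> ('w, 'a) ser \<Rightarrow> ('w, 'a) ser" where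
  "log_base e f = (THE u. u None = 0 \<and> apply_base e u = f)"

datatype xy = X | Y

instance xy :: finite
proof
  have "(UNIV :: xy set) = {X, Y}" using xy.exhaust by blast
  then show "finite (UNIV :: xy set)" by (metis finite.emptyI finite.insertI)
qed

fun ydeg_tree :: "xy ntree \<Rightarrow> nat" where
  "ydeg_tree (MLeaf v) = (if v = Y then 1 else 0)"
| "ydeg_tree (MNode a b) = ydeg_tree a + ydeg_tree b"

definition ydeg :: "xy mon \<Rightarrow> nat" where
  "ydeg m = (case m of None \<Rightarrow> 0 | Some t \<Rightarrow> ydeg_tree t)"

text \<open>d/ds at s = 0 of F(x + s y): the part of F(x+y) of degree exactly one in y.\<close>
definition ds_at0 :: "(xy, 'a::comm_ring_1) ser \<Rightarrow> (xy, 'a) ser" where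
  "ds_at0 F = (\<lambda>w. if ydeg w = 1 then F w else 0)"

definition tau :: "(unit, 'a::comm_ring_1) ser \<Rightarrow> (xy, 'a) ser" where
  "tau e = ldiv (apply_base e (var X)) (ds_at0 (apply_base e (\<lambda>w. var X w + var Y w)))"

text \<open>(\<tau>^{e(x)})^{-1}(y): the series T (with zero constant term, so that substitution
makes sense) such that substituting y := T in \<tau>^{e(x)}(y) yields y.\<close>
definition tau_inv :: "(unit, 'a::comm_ring_1) ser \<Rightarrow> (xy, 'a) ser" where
  "tau_inv e = (THE T. T None = 0 \<and>
      subst (\<lambda>v. if v = X then var X else T) (tau e) = var Y)"

definition O_y2 :: "(xy, 'a::zero) ser \<Rightarrow> bool" where
  "O_y2 R \<longleftrightarrow> (\<forall>w. ydeg w < 2 \<longrightarrow> R w = 0)"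

end

theory Submission
  imports Defs
begin


definition Mb :: "nat \<Rightarrow> 'v mon set" where "Mb n = {m. deg m \<le> n}"

lemma tdeg_pos: "tdeg t \<ge> 1"
  by (induction t) auto

lemma deg_Some: "deg (Some t) = tdeg t" by (simp add: deg_def)
lemma deg_None[simp]: "deg None = 0" by (simp add: deg_def)
lemma deg_zero_iff: "deg m = 0 \<longleftrightarrow> m = None"
proof (cases m)
  case (Some t) then show ?thesis using tdeg_pos[of t] by (simp add: deg_def)
qed (simp add: deg_def)

lemma finite_trees: "finite {t::'v::finite ntree. tdeg t \<le> n}"
proof (induction n rule: less_induct)
  case (less n)
  show ?case
  proof (cases n)
    case 0
    have "{t::'v ntree. tdeg t \<le> n} = {}" using tdeg_pos 0 by (metis (mono_tags, lifting) empty_Collect_eq le_zero_eq one_neq_zero)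
    then show ?thesis by simp
  next
    case (Suc k)
    have "{t::'v ntree. tdeg t \<le> n} \<subseteq> range MLeaf \<union> (\<lambda>(a,b). MNode a b) ` ({t. tdeg t \<le> k} \<times> {t. tdeg t \<le> k})"
    proof
      fix t :: "'v ntree" assume "t \<in> {t. tdeg t \<le> n}"
      then show "t \<in> range MLeaf \<union> (\<lambda>(a,b). MNode a b) ` ({t. tdeg t \<le> k} \<times> {t. tdeg t \<le> k})"
        using Suc tdeg_pos[of "case t of MNode a b \<Rightarrow> a"] tdeg_pos[of "case t of MNode a b \<Rightarrow> b"]
        by (cases t) force+
    qed
    moreover have "finite (range (MLeaf :: 'v \<Rightarrow> _))" by simp
    ultimately show ?thesis using less Suc by (meson finite_SigmaI finite_UnI finite_imageI finite_subset lessI)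
  qed
qed

lemma finite_Mb[simp]: "finite (Mb n :: 'v::finite mon set)"
proof -
  have "Mb n \<subseteq> insert None (Some ` {t::'v ntree. tdeg t \<le> n})"
    by (auto simp: Mb_def deg_def split: option.splits) (metis imageI mem_Collect_eq option.exhaust_sel)
  then show ?thesis using finite_trees finite_subset by blast
qed

lemma Mb_mono: "n \<le> k \<Longrightarrow> Mb n \<subseteq> Mb k" by (auto simp: Mb_def)
lemma in_Mb[simp]: "m \<in> Mb n \<longleftrightarrow> deg m \<le> n" by (simp add: Mb_def)

lemma sum_Mb_mono:
  assumes "n \<le> k" "\<And>m. deg m > n \<Longrightarrow> deg m \<le> k \<Longrightarrow> f m = 0"
  shows "(\<Sum>m\<in>Mb k. f (m::'v::finite mon)) = (\<Sum>m\<in>Mb n. f m)"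
  by (rule sum.mono_neutral_right) (use assms Mb_mono in \<open>auto\<close>)

lemma sum_Mb_eq:
  assumes "\<And>m. deg m > n \<Longrightarrow> f m = 0" "\<And>m. deg m > k \<Longrightarrow> f m = 0"
  shows "(\<Sum>m\<in>Mb k. f (m::'v::finite mon)) = (\<Sum>m\<in>Mb n. f m)"
proof (cases "n \<le> k")
  case True then show ?thesis by (intro sum_Mb_mono) (use assms in auto)
next
  case False then show ?thesis by (subst sum_Mb_mono[of k n]) (use assms in auto)
qed

lemma deg_mmul[simp]: "deg (mmul a b) = deg a + deg b"
  by (cases a; cases b) (auto simp: deg_def)

definition dec :: "'v mon \<Rightarrow> ('v mon \<times> 'v mon) set" where
  "dec w = {(u, v). mmul u v = w}"

lemma mmul_None_iff: "mmul a b = None \<longleftrightarrow> a = None \<and> b = None"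
  by (cases a; cases b) auto

lemma dec_None: "dec None = {(None, None)}"
  by (auto simp: dec_def mmul_None_iff)

lemma dec_leaf: "dec (Some (MLeaf v)) = {(None, Some (MLeaf v)), (Some (MLeaf v), None)}"
  unfolding dec_def
  apply (rule set_eqI) apply (case_tac x) apply simp
  subgoal for x a b by (cases a; cases b) auto
  done

lemma dec_node: "dec (Some (MNode a b)) = {(None, Some (MNode a b)), (Some (MNode a b), None), (Some a, Some b)}"
  unfolding dec_def
  apply (rule set_eqI) apply (case_tac x) apply simp
  subgoal for x x' y by (cases x'; cases y) auto
  done

lemma finite_dec[simp]: "finite (dec w)"
  by (cases w) (auto simp: dec_None, case_tac a, auto simp: dec_leaf dec_node)

lemma ser_mult_dec: "ser_mult f g w = (\<Sum>(u, v)\<in>dec w. f u * g v)"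
  by (simp add: ser_mult_def dec_def)

lemma ser_mult_None: "ser_mult f g None = f None * g None"
  by (simp add: ser_mult_dec dec_None)

lemma ser_mult_leaf: "ser_mult f g (Some (MLeaf v)) = f None * g (Some (MLeaf v)) + f (Some (MLeaf v)) * g None"
  by (simp add: ser_mult_dec dec_leaf)

lemma ser_mult_node: "ser_mult f g (Some (MNode a b)) =
   f None * g (Some (MNode a b)) + f (Some (MNode a b)) * g None + f (Some a) * g (Some b)"
  by (simp add: ser_mult_dec dec_node)

lemma dec_deg: "(u, v) \<in> dec w \<Longrightarrow> deg u + deg v = deg w"
  by (auto simp: dec_def)


lemma sum_dec_reindex:
  assumes "\<And>x1 x2. H x1 x2 \<noteq> 0 \<Longrightarrow> deg x1 \<le> n1 \<and> deg x2 \<le> n2" "n1 + n2 \<le> N"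
  shows "(\<Sum>x\<in>(Mb N :: 'v::finite mon set). \<Sum>(x1,x2)\<in>dec x. H x1 x2) = (\<Sum>x1\<in>Mb n1. \<Sum>x2\<in>Mb n2. (H x1 x2 :: 'a::comm_monoid_add))"
    (is "?L = ?R")
proof -
  let ?S = "{p::('v::finite mon \<times> 'v mon). deg (fst p) + deg (snd p) \<le> N}"
  have fS: "finite ?S"
    by (rule finite_subset[of _ "Mb N \<times> Mb N"]) (auto intro: finite_cartesian_product)
  have "?L = (\<Sum>q\<in>Sigma (Mb N) dec. case snd q of (x1,x2) \<Rightarrow> H x1 x2)"
    by (subst sum.Sigma) (auto simp: case_prod_beta)
  also have "\<dots> = (\<Sum>p\<in>snd ` Sigma (Mb N) dec. case p of (x1,x2) \<Rightarrow> H x1 x2)"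
    by (subst sum.reindex) (auto simp: inj_on_def dec_def)
  also have "snd ` Sigma (Mb N) dec = ?S"
    by (auto simp: dec_def image_iff)
  also have "(\<Sum>p\<in>?S. case p of (x1,x2) \<Rightarrow> H x1 x2) = (\<Sum>p\<in>Mb n1 \<times> Mb n2. case p of (x1,x2) \<Rightarrow> H x1 x2)"
    by (rule sum.mono_neutral_right) (use fS assms in \<open>auto\<close>)
  also have "\<dots> = ?R" by (simp add: sum.cartesian_product)
  finally show ?thesis .
qed

abbreviation cm :: "'v mon \<Rightarrow> ('v, 'a::comm_ring_1) tser" where "cm \<equiv> coprod_mon"

lemma tmult_dec: "tmult F G (a, b) = (\<Sum>p\<in>dec a. \<Sum>q\<in>dec b. F (fst p, fst q) * G (snd p, snd q))"
  unfolding tmult_def dec_def by (simp add: sum.cartesian_product case_prod_beta)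

lemma cm_None: "cm None (a, b) = (if a = None \<and> b = None then 1 else 0)"
  by (simp add: coprod_mon_def tmon_def)

lemma cm_leaf: "cm (Some (MLeaf v)) (a, b) =
   (if a = Some (MLeaf v) \<and> b = None then 1 else 0) + (if a = None \<and> b = Some (MLeaf v) then 1 else 0)"
  by (simp add: coprod_mon_def tmon_def)

lemma cm_node: "cm (Some (MNode s t)) = tmult (cm (Some s)) (cm (Some t))"
  by (simp add: coprod_mon_def)

lemma cm_deg_tree: "(cm (Some t) (a, b) :: 'a::comm_ring_1) \<noteq> 0 \<Longrightarrow> deg a + deg b = tdeg t"
proof (induction t arbitrary: a b)
  case (MLeaf v) then show ?case by (simp add: cm_leaf deg_def split: if_splits)
next
  case (MNode s t)
  from MNode.prems have "(\<Sum>p\<in>dec a. \<Sum>q\<in>dec b. cm (Some s) (fst p, fst q) * cm (Some t) (snd p, snd q)) \<noteq> (0::'a)"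
    by (simp only: cm_node tmult_dec not_False_eq_True)
  then obtain p where p: "p \<in> dec a" "(\<Sum>q\<in>dec b. cm (Some s) (fst p, fst q) * cm (Some t) (snd p, snd q)) \<noteq> (0::'a)"
    by (meson sum.not_neutral_contains_not_neutral)
  then obtain q where q: "q \<in> dec b" "cm (Some s) (fst p, fst q) * cm (Some t) (snd p, snd q) \<noteq> (0::'a)"
    by (meson sum.not_neutral_contains_not_neutral)
  have c1: "cm (Some s) (fst p, fst q) \<noteq> (0::'a)" and c2: "cm (Some t) (snd p, snd q) \<noteq> (0::'a)"
    using q(2) by auto
  have "deg (fst p) + deg (fst q) = tdeg s" "deg (snd p) + deg (snd q) = tdeg t"
    using MNode.IH(1)[OF c1] MNode.IH(2)[OF c2] by auto
  with p(1) q(1) show ?case by (cases p, cases q) (auto simp: dec_def)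
qed

lemma cm_deg: "(cm u (a, b) :: 'a::comm_ring_1) \<noteq> 0 \<Longrightarrow> deg a + deg b = deg u"
  using cm_deg_tree[of _ a b, where 'a='a] by (cases u) (auto simp: cm_None deg_def split: if_splits)

lemma sum_dec_indicator: "(\<Sum>p\<in>dec a. if p = (x, y) then (1::'a::comm_ring_1) else 0) = (if mmul x y = a then 1 else 0)"
  by (subst sum.delta[OF finite_dec]) (simp add: dec_def)

lemma cm_right_None_tree: "(cm (Some t) (a, None) :: 'a::comm_ring_1) = (if a = Some t then 1 else 0)"
proof (induction t arbitrary: a)
  case (MLeaf v) then show ?case by (simp add: cm_leaf)
next
  case (MNode s t)
  have "(cm (Some (MNode s t)) (a, None) :: 'a) = (\<Sum>p\<in>dec a. cm (Some s) (fst p, None) * cm (Some t) (snd p, None))"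
    by (simp add: cm_node tmult_dec dec_None)
  also have "\<dots> = (\<Sum>p\<in>dec a. if p = (Some s, Some t) then 1 else 0)"
    by (intro sum.cong refl) (auto simp: MNode.IH prod_eq_iff)
  finally show ?case by (simp add: sum_dec_indicator eq_commute)
qed

lemma cm_right_None: "(cm u (a, None) :: 'a::comm_ring_1) = (if a = u then 1 else 0)"
  by (cases u) (auto simp: cm_None cm_right_None_tree)

lemma cm_left_None_tree: "(cm (Some t) (None, b) :: 'a::comm_ring_1) = (if b = Some t then 1 else 0)"
proof (induction t arbitrary: b)
  case (MLeaf v) then show ?case by (simp add: cm_leaf)
next
  case (MNode s t)
  have "(cm (Some (MNode s t)) (None, b) :: 'a) = (\<Sum>p\<in>dec b. cm (Some s) (None, fst p) * cm (Some t) (None, snd p))"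
    by (simp add: cm_node tmult_dec dec_None)
  also have "\<dots> = (\<Sum>p\<in>dec b. if p = (Some s, Some t) then 1 else 0)"
    by (intro sum.cong refl) (auto simp: MNode.IH prod_eq_iff)
  finally show ?case by (simp add: sum_dec_indicator eq_commute)
qed

lemma cm_left_None: "(cm u (None, b) :: 'a::comm_ring_1) = (if b = u then 1 else 0)"
  by (cases u) (auto simp: cm_None cm_left_None_tree)

lemma mmul_None_right[simp]: "mmul a None = a" by (cases a) auto

lemma sum_dec2_delta:
  assumes "p0 \<in> dec a" "q0 \<in> dec b"
  shows "(\<Sum>p\<in>dec a. \<Sum>q\<in>dec b. if p = p0 \<and> q = q0 then c else (0::'a::comm_ring_1)) = c"
proof -
  have "(\<Sum>p\<in>dec a. \<Sum>q\<in>dec b. if p = p0 \<and> q = q0 then c else (0::'a)) =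
        (\<Sum>p\<in>dec a. if p = p0 then (\<Sum>q\<in>dec b. if q = q0 then c else 0) else 0)"
    by (intro sum.cong refl) auto
  also have "\<dots> = c" using assms by simp
  finally show ?thesis .
qed

lemma tmult_unit_left: "tmult (cm None) G (a, b) = (G (a, b) :: 'a::comm_ring_1)"
proof -
  have "tmult (cm None) G (a, b) = (\<Sum>p\<in>dec a. \<Sum>q\<in>dec b. if p = (None, a) \<and> q = (None, b) then G (a, b) else 0)"
    unfolding tmult_dec cm_None
    by (intro sum.cong refl) (auto simp: dec_def)
  also have "\<dots> = G (a, b)"
    by (rule sum_dec2_delta) (auto simp: dec_def)
  finally show ?thesis .
qed

lemma tmult_unit_right: "tmult F (cm None) (a, b) = (F (a, b) :: 'a::comm_ring_1)"
proof -
  have "tmult F (cm None) (a, b) = (\<Sum>p\<in>dec a. \<Sum>q\<in>dec b. if p = (a, None) \<and> q = (b, None) then F (a, b) else 0)"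
    unfolding tmult_dec cm_None
    by (intro sum.cong refl) (auto simp: dec_def)
  also have "\<dots> = F (a, b)"
    by (rule sum_dec2_delta) (auto simp: dec_def)
  finally show ?thesis .
qed

lemma cm_mmul: "cm (mmul x y) (a, b) = (tmult (cm x) (cm y) (a, b) :: 'a::comm_ring_1)"
  by (cases x; cases y) (simp_all add: tmult_unit_left tmult_unit_right cm_node)

lemma cm_comm: "cm u (a, b) = cm u (b, a)"
proof (cases u)
  case None then show ?thesis by (auto simp: cm_None)
next
  case (Some t)
  have "cm (Some t) (a, b) = cm (Some t) (b, a)" for a b
  proof (induction t arbitrary: a b)
    case (MLeaf v) then show ?case by (simp add: cm_leaf)
  next
    case (MNode s t)
    show ?case unfolding cm_node tmult_dec
      by (subst sum.swap) (simp add: MNode.IH)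
  qed
  then show ?thesis using Some by simp
qed


lemma sum_dec_cong: "(\<And>x1 x2. mmul x1 x2 = w \<Longrightarrow> f (x1,x2) = g (x1,x2)) \<Longrightarrow> sum f (dec w) = sum g (dec w)"
  by (rule sum.cong) (auto simp: dec_def)

definition dL :: "'v::finite mon \<Rightarrow> 'v mon \<Rightarrow> 'v mon \<Rightarrow> 'v mon \<Rightarrow> 'a::comm_ring_1" where
  "dL u a c b = (\<Sum>x\<in>Mb (deg u). cm u (x, b) * cm x (a, c))"

lemma cm_nz_deg_le: "(cm u (a, b) :: 'a::comm_ring_1) \<noteq> 0 \<Longrightarrow> deg a \<le> deg u \<and> deg b \<le> deg u"
  using cm_deg by fastforce

lemma dL_node: "(dL (Some (MNode s t)) a c b :: 'a::comm_ring_1) =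
  (\<Sum>p\<in>dec a. \<Sum>q\<in>dec c. \<Sum>r\<in>dec b. dL (Some s) (fst p) (fst q) (fst r) * dL (Some t) (snd p) (snd q) (snd r))"
proof -
  define A where "A x1 x2 p q r = (cm (Some s) (x1, fst r) * cm (Some t) (x2, snd r) * (cm x1 (fst p, fst q) * cm x2 (snd p, snd q)) :: 'a)" for x1 x2 p q r
  define H where "H x1 x2 = (\<Sum>r\<in>dec b. cm (Some s) (x1, fst r) * cm (Some t) (x2, snd r)) * (cm (mmul x1 x2) (a, c) :: 'a)" for x1 x2
  have "dL (Some (MNode s t)) a c b = (\<Sum>x\<in>Mb (tdeg s + tdeg t). \<Sum>(x1,x2)\<in>dec x. H x1 x2)"
    unfolding dL_def H_def deg_Some tdeg.simps
    apply (intro sum.cong refl)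
    apply (simp only: cm_node tmult_dec sum_distrib_right)
    apply (simp only: sum_distrib_right[of _ "dec _"] split_def)
    apply (rule sum_dec_cong)
    by simp
  also have "\<dots> = (\<Sum>x1\<in>Mb (tdeg s). \<Sum>x2\<in>Mb (tdeg t). H x1 x2)"
  proof (rule sum_dec_reindex)
    fix x1 x2 assume "H x1 x2 \<noteq> 0"
    then have "(\<Sum>r\<in>dec b. cm (Some s) (x1, fst r) * cm (Some t) (x2, snd r)) \<noteq> (0::'a)"
      unfolding H_def by auto
    then obtain r where "cm (Some s) (x1, fst r) * cm (Some t) (x2, snd r) \<noteq> (0::'a)"
      by (meson sum.not_neutral_contains_not_neutral)
    then have "cm (Some s) (x1, fst r) \<noteq> (0::'a)" "cm (Some t) (x2, snd r) \<noteq> (0::'a)" by auto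
    then show "deg x1 \<le> tdeg s \<and> deg x2 \<le> tdeg t"
      using cm_nz_deg_le[of "Some s" x1 "fst r", where 'a='a] cm_nz_deg_le[of "Some t" x2 "snd r", where 'a='a]
      by (simp add: deg_Some)
  qed simp
  also have "\<dots> = (\<Sum>x1\<in>Mb (tdeg s). \<Sum>x2\<in>Mb (tdeg t). \<Sum>p\<in>dec a. \<Sum>q\<in>dec c. \<Sum>r\<in>dec b. A x1 x2 p q r)"
    unfolding H_def A_def cm_mmul tmult_dec
    by (simp add: sum_distrib_left sum_distrib_right)
  also have "\<dots> = (\<Sum>p\<in>dec a. \<Sum>q\<in>dec c. \<Sum>r\<in>dec b. \<Sum>x1\<in>Mb (tdeg s). \<Sum>x2\<in>Mb (tdeg t). A x1 x2 p q r)"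
  proof -
    have e1: "(\<Sum>x2\<in>Mb (tdeg t). \<Sum>p\<in>dec a. \<Sum>q\<in>dec c. \<Sum>r\<in>dec b. A x1 x2 p q r) =
          (\<Sum>p\<in>dec a. \<Sum>q\<in>dec c. \<Sum>r\<in>dec b. \<Sum>x2\<in>Mb (tdeg t). A x1 x2 p q r)" for x1
      apply (rule trans[OF sum.swap]) apply (rule sum.cong[OF refl])
      apply (rule trans[OF sum.swap]) apply (rule sum.cong[OF refl])
      by (rule sum.swap)
    have e2: "(\<Sum>x1\<in>Mb (tdeg s). \<Sum>p\<in>dec a. \<Sum>q\<in>dec c. \<Sum>r\<in>dec b. F x1 p q r) =
          (\<Sum>p\<in>dec a. \<Sum>q\<in>dec c. \<Sum>r\<in>dec b. \<Sum>x1\<in>Mb (tdeg s). F x1 p q r)" for F :: "_ \<Rightarrow> _ \<Rightarrow> _ \<Rightarrow> _ \<Rightarrow> 'a"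
      apply (rule trans[OF sum.swap]) apply (rule sum.cong[OF refl])
      apply (rule trans[OF sum.swap]) apply (rule sum.cong[OF refl])
      by (rule sum.swap)
    show ?thesis by (simp only: e1 e2)
  qed
  also have "\<dots> = (\<Sum>p\<in>dec a. \<Sum>q\<in>dec c. \<Sum>r\<in>dec b. dL (Some s) (fst p) (fst q) (fst r) * dL (Some t) (snd p) (snd q) (snd r))"
    unfolding dL_def A_def deg_Some sum_product
    apply (rule sum.cong[OF refl])+
    by (simp only: ac_simps)
  finally show ?thesis .
qed


lemma sum_cm_leaf: "(\<Sum>x\<in>(Mb N :: 'v::finite mon set). cm (Some (MLeaf v)) (x, b) * F x) =
   (if b = None then F (Some (MLeaf v)) else 0) + (if b = Some (MLeaf v) then F None else (0::'a::comm_ring_1))"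
  if "N \<ge> 1"
proof -
  have "(\<Sum>x\<in>Mb N. cm (Some (MLeaf v)) (x, b) * F x) =
     (\<Sum>x\<in>Mb N. (if x = Some (MLeaf v) then (if b = None then F x else 0) else 0)) +
     (\<Sum>x\<in>Mb N. (if x = None then (if b = Some (MLeaf v) then F x else 0) else 0))"
    unfolding cm_leaf sum.distrib[symmetric] by (intro sum.cong refl) auto
  also have "\<dots> = (if b = None then F (Some (MLeaf v)) else 0) + (if b = Some (MLeaf v) then F None else 0)"
    using that by (simp add: deg_def)
  finally show ?thesis .
qed

lemma sum_rev3: "(\<Sum>p\<in>A. \<Sum>q\<in>B. \<Sum>r\<in>C. F p q r) = (\<Sum>r\<in>C. \<Sum>q\<in>B. \<Sum>p\<in>A. F p q r)"
proof -
  have "(\<Sum>p\<in>A. \<Sum>q\<in>B. \<Sum>r\<in>C. F p q r) = (\<Sum>p\<in>A. \<Sum>r\<in>C. \<Sum>q\<in>B. F p q r)"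
    by (rule sum.cong[OF refl], rule sum.swap)
  also have "\<dots> = (\<Sum>r\<in>C. \<Sum>p\<in>A. \<Sum>q\<in>B. F p q r)" by (rule sum.swap)
  also have "\<dots> = (\<Sum>r\<in>C. \<Sum>q\<in>B. \<Sum>p\<in>A. F p q r)" by (rule sum.cong[OF refl], rule sum.swap)
  finally show ?thesis .
qed

lemma dL_sym_tree: "(dL (Some t) a c b :: 'a::comm_ring_1) = dL (Some t) b c a"
proof (induction t arbitrary: a b c)
  case (MLeaf v)
  have "(dL (Some (MLeaf v)) a c b :: 'a) = (if b = None then cm (Some (MLeaf v)) (a, c) else 0) + (if b = Some (MLeaf v) then cm None (a, c) else 0)" for a b c
    unfolding dL_def by (subst sum_cm_leaf) (auto simp: deg_def)
  then show ?case by (simp add: cm_leaf cm_None)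
next
  case (MNode s t)
  show ?case
    unfolding dL_node
    apply (subst MNode.IH(1)) apply (subst MNode.IH(2))
    by (rule sum_rev3)
qed

lemma dL_sym: "(dL (u :: 'v::finite mon) a c b :: 'a::comm_ring_1) = dL u b c a"
proof (cases u)
  case None
  have "Mb 0 = {None :: 'v mon}" by (auto simp: deg_zero_iff)
  then show ?thesis using None by (simp add: dL_def cm_None)
qed (simp add: dL_sym_tree)

lemma coassoc: "(\<Sum>y\<in>Mb (deg (u :: 'v::finite mon)). cm u (a, y) * cm y (c, b)) = (\<Sum>x\<in>Mb (deg u). (cm u (x, b) * cm x (a, c) :: 'a::comm_ring_1))"
proof -
  have "(\<Sum>y\<in>Mb (deg u). cm u (a, y) * cm y (c, b)) = (dL u b c a :: 'a)"
    unfolding dL_def by (intro sum.cong refl) (metis cm_comm)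
  also have "\<dots> = dL u a c b" by (rule dL_sym)
  finally show ?thesis by (simp add: dL_def)
qed


lemma sum_P_box:
  fixes u :: "'v::finite mon" and F :: "'v mon \<Rightarrow> 'v mon \<Rightarrow> 'a::comm_ring_1"
  assumes "deg u \<le> N"
  shows "(\<Sum>(a, b)\<in>{(a, b). deg a + deg b = deg u}. cm u (a, b) * F a b) =
         (\<Sum>a\<in>Mb N. \<Sum>b\<in>Mb N. (cm (u::'v::finite mon) (a, b) * F a b :: 'a::comm_ring_1))"
proof -
  have "(\<Sum>(a, b)\<in>{(a, b). deg a + deg b = deg u}. cm u (a, b) * F a b) =
        (\<Sum>(a, b)\<in>Mb N \<times> Mb N. (cm u (a, b) * F a b :: 'a))"
  proof (rule sum.mono_neutral_left)
    show "{(a, b). deg a + deg b = deg u} \<subseteq> Mb N \<times> Mb N" using assms by auto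
    show "\<forall>i\<in>(Mb N \<times> Mb N - {(a, b). deg a + deg b = deg u} :: ('v mon \<times> 'v mon) set). (case i of (a, b) \<Rightarrow> cm u (a, b) * F a b) = (0::'a)"
    proof
      fix i assume i: "i \<in> (Mb N \<times> Mb N - {(a, b). deg a + deg b = deg u} :: ('v mon \<times> 'v mon) set)"
      obtain a b where ab: "i = (a, b)" by fastforce
      have "cm u (a, b) = (0::'a)" using i ab cm_deg[of u a b, where 'a='a] by auto
      then show "(case i of (a, b) \<Rightarrow> cm u (a, b) * F a b) = (0::'a)" using ab by simp
    qed
  qed auto
  then show ?thesis by (simp add: sum.cartesian_product)
qed

lemma mon_None_apply: "mon None w = (if w = None then 1 else 0)" by (simp add: mon_def)

lemma ser_mult_mon: fixes a b :: "'v mon" shows "ser_mult (mon a) (mon b) = (mon (mmul a b) :: ('v, 'a::comm_ring_1) ser)"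
proof
  fix w
  have "(ser_mult (mon a) (mon b) w :: 'a) = (\<Sum>p\<in>dec w. if p = (a, b) then (1::'a) else 0)"
    unfolding ser_mult_dec mon_def by (intro sum.cong refl) (auto split: if_splits)
  also have "\<dots> = mon (mmul a b) w" by (simp add: sum_dec_indicator mon_def eq_commute)
  finally show "(ser_mult (mon a) (mon b) w :: 'a) = mon (mmul a b) w" .
qed

lemma ser_mult_sum_right: "ser_mult f (\<lambda>w. \<Sum>i\<in>I. c i * g i w) w0 = (\<Sum>i\<in>I. c i * ser_mult f (g i) w0)"
  unfolding ser_mult_dec
  by (simp add: sum_distrib_left sum_distrib_right case_prod_beta mult_ac sum.swap[of _ I])

lemma sum_ind_mult: "finite A \<Longrightarrow> (\<Sum>b\<in>A. (if b = u then (1::'a::comm_ring_1) else 0) * f b) = (if u \<in> A then f u else 0)"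
proof -
  assume A: "finite A"
  have "(\<Sum>b\<in>A. (if b = u then (1::'a) else 0) * f b) = (\<Sum>b\<in>A. if b = u then f b else 0)"
    by (rule sum.cong) auto
  then show ?thesis using A by simp
qed

lemma sum_mult_ind: "finite A \<Longrightarrow> (\<Sum>b\<in>A. f b * (if b = u then (1::'a::comm_ring_1) else 0)) = (if u \<in> A then f u else 0)"
proof -
  assume A: "finite A"
  have "(\<Sum>b\<in>A. f b * (if b = u then (1::'a) else 0)) = (\<Sum>b\<in>A. if b = u then f b else 0)"
    by (rule sum.cong) auto
  then show ?thesis using A by simp
qed

fun Dn :: "nat \<Rightarrow> 'v::finite mon \<Rightarrow> 'v mon \<Rightarrow> ('v, 'a::comm_ring_1) ser" where
  "Dn 0 u v = mon v"
| "Dn (Suc n) u v = (if u = None then mon v else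
     (\<lambda>w. - (\<Sum>a\<in>Mb (deg u). \<Sum>b\<in>Mb (deg u). if deg a < deg u then cm u (a, b) * Dn n a (mmul b v) w else 0)))"

definition Dc :: "'v::finite mon \<Rightarrow> 'v mon \<Rightarrow> ('v, 'a::comm_ring_1) ser" where
  "Dc u v = Dn (deg u) u v"

lemma Dn_Suc_nN: "u \<noteq> None \<Longrightarrow> Dn (Suc n) u v =
     (\<lambda>w. - (\<Sum>a\<in>Mb (deg u). \<Sum>b\<in>Mb (deg u). if deg a < deg u then cm u (a, b) * Dn n a (mmul b v) w else 0))"
  unfolding Dn.simps by (rule if_not_P)

lemma Dn_stable: "deg u \<le> n \<Longrightarrow> (Dn n u v :: ('v::finite, 'a::comm_ring_1) ser) = Dc u v"
proof (induction n arbitrary: u v rule: less_induct)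
  case (less n)
  show ?case
  proof (cases "u = None")
    case True then show ?thesis by (cases n) (auto simp: Dc_def)
  next
    case False
    then obtain k where k: "deg u = Suc k" using deg_zero_iff by (metis not0_implies_Suc)
    with less.prems obtain m where m: "n = Suc m" "k \<le> m" by (cases n) auto
    have "(Dn m a x :: ('v, 'a) ser) = Dn k a x" if "deg a < deg u" for a x
      using less.IH[of m a x] less.IH[of k a x] that k m by auto
    then show ?thesis using k m False unfolding Dc_def
      by (simp del: Dn.simps add: Dn_Suc_nN[OF False]) (intro ext arg_cong[where f=uminus] sum.cong refl, auto)
  qed
qed

lemma Dc_None: "Dc None v = mon v" by (simp add: Dc_def)

lemma Dc_rec: "u \<noteq> None \<Longrightarrow> (Dc u v w :: 'a::comm_ring_1) =
   - (\<Sum>a\<in>Mb (deg u). \<Sum>b\<in>Mb (deg u). if deg a < deg u then cm u (a, b) * Dc a (mmul b v) w else 0)"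
proof -
  assume u: "u \<noteq> None"
  then obtain k where k: "deg u = Suc k" using deg_zero_iff by (metis not0_implies_Suc)
  have "Dc u v w = Dn (Suc k) u v w" by (simp add: Dc_def k)
  also have "\<dots> = - (\<Sum>a\<in>Mb (deg u). \<Sum>b\<in>Mb (deg u). if deg a < deg u then cm u (a, b) * Dc a (mmul b v) w else 0)"
    using u k by (auto simp: Dn_stable intro!: sum.cong)
  finally show ?thesis .
qed

lemma box_split:
  fixes F :: "'v::finite mon \<Rightarrow> 'v mon \<Rightarrow> 'a::comm_ring_1"
  assumes "deg u \<le> N"
  shows "(\<Sum>a\<in>Mb N. \<Sum>b\<in>Mb N. cm (u::'v::finite mon) (a, b) * F a b) =
     F u None + (\<Sum>a\<in>Mb N. \<Sum>b\<in>Mb N. if deg a < deg u then cm u (a, b) * F a b else (0::'a::comm_ring_1))"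
proof -
  have s1: "(\<Sum>a\<in>Mb N. \<Sum>b\<in>Mb N. cm u (a, b) * F a b) =
     (\<Sum>a\<in>Mb N. \<Sum>b\<in>Mb N. if deg a < deg u then 0 else cm u (a, b) * F a b) +
     (\<Sum>a\<in>Mb N. \<Sum>b\<in>Mb N. if deg a < deg u then cm u (a, b) * F a b else 0)"
    by (simp add: sum.distrib[symmetric] if_distrib cong: if_cong)
  have pt: "(if deg a < deg u then 0 else cm u (a, b) * F a b) = (if a = u then (if b = (None::'v mon) then F u None else 0) else (0::'a))" for a b
  proof (cases "cm u (a, b) = (0::'a)")
    case True
    then show ?thesis using cm_right_None[of u a, where 'a='a] by auto
  next
    case False
    then have "deg a + deg b = deg u" using cm_deg by blast
    with False show ?thesis using cm_right_None[of u a, where 'a='a] deg_zero_iff[of b] by auto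
  qed
  have "(\<Sum>a\<in>Mb N. \<Sum>b\<in>Mb N. if deg a < deg u then 0 else cm u (a, b) * F a b) =
             (\<Sum>a\<in>Mb N. \<Sum>b\<in>Mb N. if a = u then (if b = (None::'v mon) then F u None else 0) else (0::'a))"
    by (simp only: pt)
  also have "\<dots> = (\<Sum>a\<in>Mb N. if a = u then (\<Sum>b\<in>Mb N. if b = (None::'v mon) then F u None else 0) else (0::'a))"
    by (rule sum.cong) auto
  also have "\<dots> = F u None" using assms by simp
  finally have "(\<Sum>a\<in>Mb N. \<Sum>b\<in>Mb N. if deg a < deg u then 0 else cm u (a, b) * F a b) = F u None" .
  then show ?thesis using s1 by simp
qed

lemma Dc_cond1_box:
  fixes u v :: "'v::finite mon"
  assumes "deg u \<le> N"
  shows "(\<Sum>a\<in>Mb N. \<Sum>b\<in>Mb N. cm u (a, b) * Dc a (mmul b v) w) = (if u = None then mon v w else (0::'a::comm_ring_1))"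
proof (cases "u = None")
  case True
  then show ?thesis using box_split[OF assms, of "\<lambda>a b. Dc a (mmul b v) w"] by (simp add: Dc_None)
next
  case False
  have "(\<Sum>a\<in>Mb N. \<Sum>b\<in>Mb N. if deg a < deg u then cm u (a, b) * Dc a (mmul b v) w else (0::'a)) =
        (\<Sum>a\<in>Mb (deg u). \<Sum>b\<in>Mb (deg u). if deg a < deg u then cm u (a, b) * Dc a (mmul b v) w else 0)"
  proof -
    have "(\<Sum>b\<in>Mb N. if deg a < deg u then cm u (a, b) * Dc a (mmul b v) w else (0::'a)) =
          (\<Sum>b\<in>Mb (deg u). if deg a < deg u then cm u (a, b) * Dc a (mmul b v) w else (0::'a))" for a
    proof (rule sum_Mb_mono[OF assms])
      fix b :: "'v mon" assume "deg b > deg u"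
      then have "cm u (a, b) = (0::'a)" using cm_nz_deg_le[of u a b, where 'a='a] by auto
      then show "(if deg a < deg u then cm u (a, b) * Dc a (mmul b v) w else (0::'a)) = 0" by simp
    qed
    then have "(\<Sum>a\<in>Mb N. \<Sum>b\<in>Mb N. if deg a < deg u then cm u (a, b) * Dc a (mmul b v) w else (0::'a)) =
          (\<Sum>a\<in>Mb N. \<Sum>b\<in>Mb (deg u). if deg a < deg u then cm u (a, b) * Dc a (mmul b v) w else (0::'a))"
      by simp
    also have "\<dots> = (\<Sum>a\<in>Mb (deg u). \<Sum>b\<in>Mb (deg u). if deg a < deg u then cm u (a, b) * Dc a (mmul b v) w else (0::'a))"
      by (rule sum_Mb_mono[OF assms]) (auto intro!: sum.neutral)
    finally show ?thesis .
  qed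
  note X = this
  have A: "(\<Sum>a\<in>Mb N. \<Sum>b\<in>Mb N. cm u (a, b) * Dc a (mmul b v) w) = Dc u v w +
     (\<Sum>a\<in>Mb N. \<Sum>b\<in>Mb N. if deg a < deg u then cm u (a, b) * Dc a (mmul b v) w else (0::'a))"
    using box_split[OF assms, of "\<lambda>a b. Dc a (mmul b v) w"] by simp
  show ?thesis unfolding if_not_P[OF False] A X Dc_rec[OF False, of v w] by simp
qed


lemma Dc_homog: "(Dc u v w :: 'a::comm_ring_1) \<noteq> 0 \<Longrightarrow> deg w = deg u + deg (v::'v::finite mon)"
proof (induction "deg u" arbitrary: u v w rule: less_induct)
  case less
  show ?case
  proof (cases "u = None")
    case True then show ?thesis using less.prems by (auto simp: Dc_None mon_def split: if_splits)
  next
    case False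
    then have "(\<Sum>a\<in>Mb (deg u). \<Sum>b\<in>Mb (deg u). if deg a < deg u then cm u (a, b) * Dc a (mmul b v) w else (0::'a)) \<noteq> 0"
      using less.prems Dc_rec[OF False, of v w, where 'a='a] by auto
    then obtain a where "(\<Sum>b\<in>Mb (deg u). if deg a < deg u then cm u (a, b) * Dc a (mmul b v) w else (0::'a)) \<noteq> 0"
      by (meson sum.not_neutral_contains_not_neutral)
    then obtain b where "b \<in> Mb (deg u)" and b: "(if deg a < deg u then cm u (a, b) * Dc a (mmul b v) w else (0::'a)) \<noteq> 0"
      by (rule sum.not_neutral_contains_not_neutral)
    then have "deg a < deg u" "cm u (a, b) \<noteq> (0::'a)" "Dc a (mmul b v) w \<noteq> (0::'a)"
      by (auto split: if_splits)
    then show ?thesis using less.hyps[of a "mmul b v" w] cm_deg[of u a b, where 'a='a] by auto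
  qed
qed

lemma box_enlarge:
  fixes u :: "'v::finite mon" and F :: "'v mon \<Rightarrow> 'v mon \<Rightarrow> 'a::comm_ring_1"
  assumes "deg u \<le> N"
  shows "(\<Sum>a\<in>Mb N. \<Sum>b\<in>Mb N. cm u (a, b) * F a b) = (\<Sum>a\<in>Mb (deg u). \<Sum>b\<in>Mb (deg u). cm u (a, b) * F a b)"
  using sum_P_box[OF assms, of F] sum_P_box[of u "deg u" F] by simp

lemma move_first_last: "(\<Sum>a\<in>A. \<Sum>b\<in>B. \<Sum>c\<in>C. \<Sum>d\<in>D. F a b c d) = (\<Sum>b\<in>B. \<Sum>c\<in>C. \<Sum>d\<in>D. \<Sum>a\<in>A. F a b c d)"
proof -
  have "(\<Sum>a\<in>A. \<Sum>b\<in>B. \<Sum>c\<in>C. \<Sum>d\<in>D. F a b c d) = (\<Sum>b\<in>B. \<Sum>a\<in>A. \<Sum>c\<in>C. \<Sum>d\<in>D. F a b c d)"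
    by (rule sum.swap)
  also have "\<dots> = (\<Sum>b\<in>B. \<Sum>c\<in>C. \<Sum>a\<in>A. \<Sum>d\<in>D. F a b c d)"
    by (rule sum.cong[OF refl], rule sum.swap)
  also have "\<dots> = (\<Sum>b\<in>B. \<Sum>c\<in>C. \<Sum>d\<in>D. \<Sum>a\<in>A. F a b c d)"
    by (rule sum.cong[OF refl], rule sum.cong[OF refl], rule sum.swap)
  finally show ?thesis .
qed

lemma ser_mult_sum2_right: "ser_mult f (\<lambda>w. \<Sum>i\<in>I. \<Sum>j\<in>J. c i j * g i j w) w0 = (\<Sum>i\<in>I. \<Sum>j\<in>J. c i j * ser_mult f (g i j) w0)"
proof -
  have "ser_mult f (\<lambda>w. \<Sum>i\<in>I. \<Sum>j\<in>J. c i j * g i j w) w0 = ser_mult f (\<lambda>w. \<Sum>i\<in>I. 1 * (\<lambda>w. \<Sum>j\<in>J. c i j * g i j w) w) w0"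
    by simp
  also have "\<dots> = (\<Sum>i\<in>I. 1 * ser_mult f (\<lambda>w. \<Sum>j\<in>J. c i j * g i j w) w0)"
    by (rule ser_mult_sum_right)
  also have "\<dots> = (\<Sum>i\<in>I. \<Sum>j\<in>J. c i j * ser_mult f (g i j) w0)"
    by (simp add: ser_mult_sum_right)
  finally show ?thesis .
qed

definition C2 :: "'v::finite mon \<Rightarrow> 'v mon \<Rightarrow> 'v mon \<Rightarrow> 'a::comm_ring_1" where
  "C2 u v w = (\<Sum>a\<in>Mb (deg u). \<Sum>b\<in>Mb (deg u). cm u (a, b) * ser_mult (mon a) (Dc b v) w)
     - (if u = None then mon v w else 0)"

lemma key_identity:
  fixes u v :: "'v::finite mon"
  shows "(\<Sum>a\<in>Mb (deg u). \<Sum>b\<in>Mb (deg u). cm u (a, b) * (C2 a (mmul b v) w :: 'a::comm_ring_1)) = 0"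
proof -
  define N where "N = deg u"
  define G where "G c d b = (ser_mult (mon c) (Dc d (mmul b v)) w :: 'a)" for c d b
  have C2N: "cm u (a, b) * C2 a (mmul b v) w = cm u (a, b) * ((\<Sum>c\<in>Mb N. \<Sum>d\<in>Mb N. cm a (c, d) * G c d b)
       - (if a = None then mon (mmul b v) w else 0))" for a b
  proof (cases "cm u (a, b) = (0::'a)")
    case False
    then have "deg a \<le> N" using cm_nz_deg_le[of u a b, where 'a='a] by (auto simp: N_def)
    then show ?thesis unfolding C2_def G_def using box_enlarge[of a N, where 'a='a] by simp
  qed simp
  have part2: "(\<Sum>a\<in>Mb N. \<Sum>b\<in>Mb N. cm u (a, b) * (if a = None then mon (mmul b v) w else (0::'a))) = mon (mmul u v) w"
  proof -
    have "(\<Sum>a\<in>Mb N. \<Sum>b\<in>Mb N. cm u (a, b) * (if a = None then mon (mmul b v) w else (0::'a))) =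
          (\<Sum>a\<in>Mb N. if a = (None::'v mon) then (\<Sum>b\<in>Mb N. if b = u then mon (mmul u v) w else 0) else 0)"
      by (rule sum.cong[OF refl]) (auto simp: cm_left_None N_def sum_ind_mult)
    also have "\<dots> = mon (mmul u v) w" by (simp add: N_def)
    finally show ?thesis .
  qed
  have part1: "(\<Sum>a\<in>Mb N. \<Sum>b\<in>Mb N. cm u (a, b) * (\<Sum>c\<in>Mb N. \<Sum>d\<in>Mb N. cm a (c, d) * G c d b)) = mon (mmul u v) w"
  proof -
    have "(\<Sum>a\<in>Mb N. \<Sum>b\<in>Mb N. cm u (a, b) * (\<Sum>c\<in>Mb N. \<Sum>d\<in>Mb N. cm a (c, d) * G c d b)) =
          (\<Sum>a\<in>Mb N. \<Sum>b\<in>Mb N. \<Sum>c\<in>Mb N. \<Sum>d\<in>Mb N. cm u (a, b) * cm a (c, d) * G c d b)"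
      by (simp add: sum_distrib_left mult.assoc)
    also have "\<dots> = (\<Sum>b\<in>Mb N. \<Sum>c\<in>Mb N. \<Sum>d\<in>Mb N. \<Sum>a\<in>Mb N. cm u (a, b) * cm a (c, d) * G c d b)"
      by (rule move_first_last)
    also have "\<dots> = (\<Sum>b\<in>Mb N. \<Sum>c\<in>Mb N. \<Sum>d\<in>Mb N. (\<Sum>a\<in>Mb N. cm u (a, b) * cm a (c, d)) * G c d b)"
      by (simp add: sum_distrib_right)
    also have "\<dots> = (\<Sum>b\<in>Mb N. \<Sum>c\<in>Mb N. \<Sum>d\<in>Mb N. (\<Sum>y\<in>Mb N. cm u (c, y) * cm y (d, b)) * G c d b)"
      unfolding N_def coassoc by simp
    also have "\<dots> = (\<Sum>b\<in>Mb N. \<Sum>c\<in>Mb N. \<Sum>d\<in>Mb N. \<Sum>y\<in>Mb N. cm u (c, y) * cm y (d, b) * G c d b)"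
      by (simp add: sum_distrib_right)
    also have "\<dots> = (\<Sum>c\<in>Mb N. \<Sum>d\<in>Mb N. \<Sum>y\<in>Mb N. \<Sum>b\<in>Mb N. cm u (c, y) * cm y (d, b) * G c d b)"
      by (rule move_first_last)
    also have "\<dots> = (\<Sum>c\<in>Mb N. \<Sum>y\<in>Mb N. \<Sum>d\<in>Mb N. \<Sum>b\<in>Mb N. cm u (c, y) * cm y (d, b) * G c d b)"
      by (rule sum.cong[OF refl], rule sum.swap)
    also have "\<dots> = (\<Sum>c\<in>Mb N. \<Sum>y\<in>Mb N. cm u (c, y) * (\<Sum>d\<in>Mb N. \<Sum>b\<in>Mb N. cm y (d, b) * G c d b))"
      by (simp add: sum_distrib_left mult.assoc)
    also have "\<dots> = (\<Sum>c\<in>Mb N. \<Sum>y\<in>Mb N. cm u (c, y) * (if y = None then mon (mmul c v) w else 0))"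
    proof (rule sum.cong[OF refl], rule sum.cong[OF refl])
      fix c y :: "'v mon" assume "c \<in> Mb N" "y \<in> Mb N"
      then have yN: "deg y \<le> N" by simp
      have "(\<Sum>d\<in>Mb N. \<Sum>b\<in>Mb N. cm y (d, b) * G c d b) =
            ser_mult (mon c) (\<lambda>w'. \<Sum>d\<in>Mb N. \<Sum>b\<in>Mb N. cm y (d, b) * Dc d (mmul b v) w') w"
        unfolding G_def by (simp add: ser_mult_sum2_right)
      also have "(\<lambda>w'. \<Sum>d\<in>Mb N. \<Sum>b\<in>Mb N. cm y (d, b) * Dc d (mmul b v) w') = (\<lambda>w'. if y = None then mon v w' else (0::'a))"
        using Dc_cond1_box[OF yN, where 'a='a] by simp
      also have "ser_mult (mon c) \<dots> w = (if y = None then mon (mmul c v) w else 0)"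
      proof (cases "y = None")
        case True then show ?thesis by (simp add: ser_mult_mon)
      next
        case False then show ?thesis unfolding if_not_P[OF False] by (simp add: ser_mult_dec)
      qed
      finally show "cm u (c, y) * (\<Sum>d\<in>Mb N. \<Sum>b\<in>Mb N. cm y (d, b) * G c d b) = cm u (c, y) * (if y = None then mon (mmul c v) w else 0)"
        by simp
    qed
    also have "\<dots> = (\<Sum>c\<in>Mb N. if c = u then mon (mmul u v) w else 0)"
      by (rule sum.cong[OF refl]) (auto simp: cm_right_None if_distrib cong: if_cong)
    also have "\<dots> = mon (mmul u v) w" by (simp add: N_def)
    finally show ?thesis .
  qed
  have "(\<Sum>a\<in>Mb (deg u). \<Sum>b\<in>Mb (deg u). cm u (a, b) * (C2 a (mmul b v) w :: 'a)) =
        (\<Sum>a\<in>Mb N. \<Sum>b\<in>Mb N. cm u (a, b) * (\<Sum>c\<in>Mb N. \<Sum>d\<in>Mb N. cm a (c, d) * G c d b))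
      - (\<Sum>a\<in>Mb N. \<Sum>b\<in>Mb N. cm u (a, b) * (if a = None then mon (mmul b v) w else (0::'a)))"
    unfolding N_def[symmetric] C2N by (simp add: right_diff_distrib sum_subtractf)
  then show ?thesis using part1 part2 by simp
qed


lemma C2_zero: "(C2 u v w :: 'a::comm_ring_1) = 0"
proof (induction "deg u" arbitrary: u v w rule: less_induct)
  case less
  have "(0::'a) = (\<Sum>a\<in>Mb (deg u). \<Sum>b\<in>Mb (deg u). cm u (a, b) * (C2 a (mmul b v) w :: 'a))"
    using key_identity[of u v w, where 'a='a] by simp
  also have "\<dots> = C2 u (mmul None v) w +
     (\<Sum>a\<in>Mb (deg u). \<Sum>b\<in>Mb (deg u). if deg a < deg u then cm u (a, b) * C2 a (mmul b v) w else (0::'a))"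
    by (rule box_split) simp
  also have "(\<Sum>a\<in>Mb (deg u). \<Sum>b\<in>Mb (deg u). if deg a < deg u then cm u (a, b) * C2 a (mmul b v) w else (0::'a)) = 0"
    using less.hyps by (intro sum.neutral ballI) simp
  finally show ?case by simp
qed

lemma ldiv_ok_Dc: "ldiv_ok (Dc :: 'v::finite mon \<Rightarrow> 'v mon \<Rightarrow> ('v, 'a::comm_ring_1) ser)"
  unfolding ldiv_ok_def
proof (intro conjI allI ext)
  fix u v w :: "'v mon"
  show "(\<Sum>(a, b)\<in>{(a, b). deg a + deg b = deg u}. cm u (a, b) * (Dc a (mmul b v) w :: 'a)) =
        ser_scale (counit (mon u)) (mon v) w"
    unfolding sum_P_box[OF order.refl] Dc_cond1_box[OF order.refl, where 'a='a]
    by (simp add: ser_scale_def counit_def mon_def)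
  show "(\<Sum>(a, b)\<in>{(a, b). deg a + deg b = deg u}. cm u (a, b) * (ser_mult (mon a) (Dc b v) w :: 'a)) =
        ser_scale (counit (mon u)) (mon v) w"
    unfolding sum_P_box[OF order.refl]
    using C2_zero[of u v w, where 'a='a] unfolding C2_def
    by (simp add: ser_scale_def counit_def mon_def)
qed

lemma ldiv_ok_unique:
  assumes "ldiv_ok (D :: 'v::finite mon \<Rightarrow> 'v mon \<Rightarrow> ('v, 'a::comm_ring_1) ser)"
  shows "D = Dc"
proof -
  have c1: "(\<Sum>a\<in>Mb (deg u). \<Sum>b\<in>Mb (deg u). cm u (a, b) * D a (mmul b v) w) = (if u = None then mon v w else (0::'a))" for u v w
  proof -
    have "(\<lambda>w. \<Sum>(a, b)\<in>{(a, b). deg a + deg b = deg u}. cm u (a, b) * D a (mmul b v) w) = ser_scale (counit (mon u)) (mon v)"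
      using assms unfolding ldiv_ok_def by blast
    then have "(\<Sum>(a, b)\<in>{(a, b). deg a + deg b = deg u}. cm u (a, b) * D a (mmul b v) w) = ser_scale (counit (mon u)) (mon v) w"
      by (rule fun_cong)
    then show ?thesis unfolding sum_P_box[OF order.refl] by (simp add: ser_scale_def counit_def mon_def)
  qed
  have "D u v w = Dc u v w" for u v w
  proof (induction "deg u" arbitrary: u v w rule: less_induct)
    case less
    have a: "D u v w + (\<Sum>a\<in>Mb (deg u). \<Sum>b\<in>Mb (deg u). if deg a < deg u then cm u (a, b) * D a (mmul b v) w else (0::'a))
        = (if u = None then mon v w else 0)"
      using c1[of u v w] box_split[OF order.refl, of u "\<lambda>a b. D a (mmul b v) w"] by simp
    have b: "Dc u v w + (\<Sum>a\<in>Mb (deg u). \<Sum>b\<in>Mb (deg u). if deg a < deg u then cm u (a, b) * Dc a (mmul b v) w else (0::'a))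
        = (if u = None then mon v w else 0)"
    proof -
      have "Dc u v w + (\<Sum>a\<in>Mb (deg u). \<Sum>b\<in>Mb (deg u). if deg a < deg u then cm u (a, b) * Dc a (mmul b v) w else (0::'a))
         = (\<Sum>a\<in>Mb (deg u). \<Sum>b\<in>Mb (deg u). cm u (a, b) * Dc a (mmul b v) w)"
        using box_split[where 'a='a, OF order.refl, of u "\<lambda>a b. Dc a (mmul b v) w"] by simp
      then show ?thesis using Dc_cond1_box[OF order.refl, of u v w, where 'a='a] by (rule trans)
    qed
    have "D u v w + (\<Sum>a\<in>Mb (deg u). \<Sum>b\<in>Mb (deg u). if deg a < deg u then cm u (a, b) * D a (mmul b v) w else (0::'a))
        = Dc u v w + (\<Sum>a\<in>Mb (deg u). \<Sum>b\<in>Mb (deg u). if deg a < deg u then cm u (a, b) * Dc a (mmul b v) w else (0::'a))"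
      using a b by (rule trans[OF _ sym])
    moreover have "(\<Sum>a\<in>Mb (deg u). \<Sum>b\<in>Mb (deg u). if deg a < deg u then cm u (a, b) * D a (mmul b v) w else (0::'a))
        = (\<Sum>a\<in>Mb (deg u). \<Sum>b\<in>Mb (deg u). if deg a < deg u then cm u (a, b) * Dc a (mmul b v) w else (0::'a))"
      using less.hyps by (intro sum.cong refl) simp
    ultimately show ?case by simp
  qed
  then show ?thesis by (intro ext) 
qed

lemma ldiv_mon_Dc: "(ldiv_mon :: 'v::finite mon \<Rightarrow> 'v mon \<Rightarrow> ('v, 'a::comm_ring_1) ser) = Dc"
  unfolding ldiv_mon_def using ldiv_ok_Dc ldiv_ok_unique by blast


lemma ldiv_box:
  fixes f g :: "('v::finite, 'a::comm_ring_1) ser"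
  assumes "deg z \<le> N"
  shows "ldiv f g z = (\<Sum>u\<in>Mb N. \<Sum>v\<in>Mb N. f u * g v * Dc u v z)"
proof -
  have "ldiv f g z = (\<Sum>(u, v)\<in>{(u, v). deg u + deg v = deg z}. f u * g v * Dc u v z)"
    unfolding ldiv_def ldiv_mon_Dc ..
  also have "\<dots> = (\<Sum>(u, v)\<in>Mb N \<times> Mb N. f u * g v * Dc u v z)"
  proof (rule sum.mono_neutral_left)
    show "{(u, v). deg u + deg v = deg z} \<subseteq> (Mb N \<times> Mb N :: ('v mon \<times> 'v mon) set)" using assms by auto
    show "\<forall>i\<in>(Mb N \<times> Mb N - {(u, v). deg u + deg v = deg z} :: ('v mon \<times> 'v mon) set). (case i of (u, v) \<Rightarrow> f u * g v * Dc u v z) = 0"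
    proof
      fix i assume i: "i \<in> (Mb N \<times> Mb N - {(u, v). deg u + deg v = deg z} :: ('v mon \<times> 'v mon) set)"
      obtain u v where uv: "i = (u, v)" by fastforce
      have "Dc u v z = (0::'a)" using i uv Dc_homog[of u v z, where 'a='a] by auto
      then show "(case i of (u, v) \<Rightarrow> f u * g v * Dc u v z) = 0" using uv by simp
    qed
  qed auto
  finally show ?thesis by (simp add: sum.cartesian_product)
qed

lemma ser_mult_mon_left: "ser_mult (mon p) H w = (\<Sum>(p', z)\<in>dec w. (if p' = p then 1 else 0) * H z)"
  unfolding ser_mult_dec mon_def ..

lemma mon_Dc_vanish:
  assumes "(ser_mult (mon p) (Dc u v) w :: 'a::comm_ring_1) \<noteq> 0"
  shows "deg p + deg u + deg v = deg (w::'v::finite mon)"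
proof -
  from assms obtain q where q: "q \<in> dec w" "(case q of (p', z) \<Rightarrow> (if p' = p then 1 else 0) * (Dc u v z :: 'a)) \<noteq> 0"
    unfolding ser_mult_mon_left by (rule sum.not_neutral_contains_not_neutral)
  obtain p' z where pz: "q = (p', z)" by fastforce
  with q have "p' = p" "Dc u v z \<noteq> (0::'a)" by (auto split: if_splits)
  with q(1) pz show ?thesis using Dc_homog[of u v z, where 'a='a] dec_deg[of p' z w] by auto
qed

lemma sum_dec_mon: 
  fixes f :: "('v::finite, 'a::comm_ring_1) ser"
  assumes "deg w \<le> N"
  shows "(\<Sum>(p, z)\<in>dec w. f p * H z) = (\<Sum>p\<in>Mb N. f p * ser_mult (mon p) H w)"
proof -
  have "(\<Sum>p\<in>Mb N. f p * ser_mult (mon p) H w) = (\<Sum>p\<in>Mb N. \<Sum>q\<in>dec w. f p * ((if fst q = p then 1 else 0) * H (snd q)))"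
    unfolding ser_mult_mon_left by (simp add: sum_distrib_left case_prod_beta)
  also have "\<dots> = (\<Sum>q\<in>dec w. \<Sum>p\<in>Mb N. f p * ((if fst q = p then 1 else 0) * H (snd q)))"
    by (rule sum.swap)
  also have "\<dots> = (\<Sum>q\<in>dec w. f (fst q) * H (snd q))"
  proof (rule sum.cong[OF refl])
    fix q assume "q \<in> dec w"
    then have "deg (fst q) \<le> N" using assms dec_deg[of "fst q" "snd q" w] by auto
    have "(\<Sum>p\<in>Mb N. f p * ((if fst q = p then 1 else 0) * H (snd q))) = (\<Sum>p\<in>Mb N. if fst q = p then f p * H (snd q) else 0)"
      by (rule sum.cong) auto
    then show "(\<Sum>p\<in>Mb N. f p * ((if fst q = p then 1 else 0) * H (snd q))) = f (fst q) * H (snd q)"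
      using \<open>deg (fst q) \<le> N\<close> by simp
  qed
  finally show ?thesis by (simp add: case_prod_beta)
qed


lemma group_like_prod:
  fixes f :: "('v::finite, 'a::comm_ring_1) ser"
  assumes gl: "coprod f = tensor f f" and "deg p + deg u \<le> K"
  shows "f p * f u = (\<Sum>s\<in>Mb K. f s * cm s (p, u))"
proof -
  have "f p * f u = coprod f (p, u)" using gl by (simp add: tensor_def fun_eq_iff)
  also have "\<dots> = (\<Sum>s\<in>{s. deg s = deg p + deg u}. f s * cm s (p, u))" by (simp add: coprod_def)
  also have "\<dots> = (\<Sum>s\<in>Mb K. f s * cm s (p, u))"
  proof (rule sum.mono_neutral_left)
    show "{s. deg s = deg p + deg u} \<subseteq> Mb K" using assms(2) by auto
    show "\<forall>i\<in>Mb K - {s. deg s = deg p + deg u}. f i * cm i (p, u) = 0"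
    proof
      fix i :: "'v mon" assume "i \<in> Mb K - {s. deg s = deg p + deg u}"
      then have "cm i (p, u) = (0::'a)" using cm_deg[of i p u, where 'a='a] by auto
      then show "f i * cm i (p, u) = 0" by simp
    qed
  qed auto
  finally show ?thesis .
qed

lemma ldiv_right_inv:
  fixes f g :: "('v::finite, 'a::comm_ring_1) ser"
  assumes gl: "coprod f = tensor f f" and f1: "f None = 1"
  shows "ser_mult f (ldiv f g) w = g w"
proof -
  define N where "N = deg w"
  define X where "X p u v = (ser_mult (mon p) (Dc u v) w :: 'a)" for p u v
  have "ser_mult f (ldiv f g) w = (\<Sum>q\<in>dec w. f (fst q) * (\<Sum>u\<in>Mb N. \<Sum>v\<in>Mb N. f u * g v * Dc u v (snd q)))"
    unfolding ser_mult_dec case_prod_beta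
  proof (rule sum.cong[OF refl])
    fix q assume "q \<in> dec w"
    then have "deg (snd q) \<le> N" using dec_deg[of "fst q" "snd q" w] by (auto simp: N_def)
    then show "f (fst q) * ldiv f g (snd q) = f (fst q) * (\<Sum>u\<in>Mb N. \<Sum>v\<in>Mb N. f u * g v * Dc u v (snd q))"
      by (simp add: ldiv_box)
  qed
  also have "\<dots> = (\<Sum>q\<in>dec w. \<Sum>u\<in>Mb N. \<Sum>v\<in>Mb N. f u * g v * (f (fst q) * Dc u v (snd q)))"
    by (simp add: sum_distrib_left mult_ac)
  also have "\<dots> = (\<Sum>u\<in>Mb N. \<Sum>v\<in>Mb N. \<Sum>q\<in>dec w. f u * g v * (f (fst q) * Dc u v (snd q)))"
    by (rule sum_rev3[THEN trans], rule sum.swap)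
  also have "\<dots> = (\<Sum>u\<in>Mb N. \<Sum>v\<in>Mb N. f u * g v * (\<Sum>p\<in>Mb N. f p * X p u v))"
  proof (rule sum.cong[OF refl], rule sum.cong[OF refl])
    fix u v
    have "(\<Sum>q\<in>dec w. f (fst q) * Dc u v (snd q)) = (\<Sum>p\<in>Mb N. f p * X p u v)"
      using sum_dec_mon[of w N f "Dc u v"] by (simp add: N_def X_def case_prod_beta)
    then show "(\<Sum>q\<in>dec w. f u * g v * (f (fst q) * Dc u v (snd q))) = f u * g v * (\<Sum>p\<in>Mb N. f p * X p u v)"
      by (simp only: sum_distrib_left[symmetric])
  qed
  also have "\<dots> = (\<Sum>v\<in>Mb N. \<Sum>p\<in>Mb N. \<Sum>u\<in>Mb N. g v * ((f p * f u) * X p u v))"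
  proof -
    have "(\<Sum>u\<in>Mb N. \<Sum>v\<in>Mb N. f u * g v * (\<Sum>p\<in>Mb N. f p * X p u v)) =
          (\<Sum>u\<in>Mb N. \<Sum>v\<in>Mb N. \<Sum>p\<in>Mb N. g v * ((f p * f u) * X p u v))"
      by (simp add: sum_distrib_left mult_ac)
    also have "\<dots> = (\<Sum>v\<in>Mb N. \<Sum>p\<in>Mb N. \<Sum>u\<in>Mb N. g v * ((f p * f u) * X p u v))"
    proof -
      have "(\<Sum>u\<in>Mb N. \<Sum>v\<in>Mb N. \<Sum>p\<in>Mb N. g v * ((f p * f u) * X p u v)) =
            (\<Sum>v\<in>Mb N. \<Sum>u\<in>Mb N. \<Sum>p\<in>Mb N. g v * ((f p * f u) * X p u v))" by (rule sum.swap)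
      also have "\<dots> = (\<Sum>v\<in>Mb N. \<Sum>p\<in>Mb N. \<Sum>u\<in>Mb N. g v * ((f p * f u) * X p u v))"
        by (rule sum.cong[OF refl], rule sum.swap)
      finally show ?thesis .
    qed
    finally show ?thesis .
  qed
  also have "\<dots> = (\<Sum>v\<in>Mb N. \<Sum>p\<in>Mb N. \<Sum>u\<in>Mb N. \<Sum>s\<in>Mb (2 * N). g v * (f s * (cm s (p, u) * X p u v)))"
  proof (rule sum.cong[OF refl], rule sum.cong[OF refl], rule sum.cong[OF refl])
    fix v p u :: "'v mon" assume "p \<in> Mb N" "u \<in> Mb N"
    then have "f p * f u = (\<Sum>s\<in>Mb (2 * N). f s * cm s (p, u))" by (intro group_like_prod[OF gl]) auto
    then show "g v * ((f p * f u) * X p u v) = (\<Sum>s\<in>Mb (2 * N). g v * (f s * (cm s (p, u) * X p u v)))"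
      by (simp add: sum_distrib_left sum_distrib_right mult_ac)
  qed
  also have "\<dots> = (\<Sum>v\<in>Mb N. g v * (\<Sum>s\<in>Mb (2 * N). f s * (\<Sum>p\<in>Mb N. \<Sum>u\<in>Mb N. cm s (p, u) * X p u v)))"
  proof (rule sum.cong[OF refl])
    fix v
    have "(\<Sum>p\<in>Mb N. \<Sum>u\<in>Mb N. \<Sum>s\<in>Mb (2 * N). g v * (f s * (cm s (p, u) * X p u v))) =
          (\<Sum>s\<in>Mb (2 * N). \<Sum>p\<in>Mb N. \<Sum>u\<in>Mb N. g v * (f s * (cm s (p, u) * X p u v)))"
      by (rule sum_rev3[THEN trans]) (rule sum.cong[OF refl], rule sum.swap)
    then show "(\<Sum>p\<in>Mb N. \<Sum>u\<in>Mb N. \<Sum>s\<in>Mb (2 * N). g v * (f s * (cm s (p, u) * X p u v))) =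
          g v * (\<Sum>s\<in>Mb (2 * N). f s * (\<Sum>p\<in>Mb N. \<Sum>u\<in>Mb N. cm s (p, u) * X p u v))"
      by (simp add: sum_distrib_left)
  qed
  also have "\<dots> = (\<Sum>v\<in>Mb N. g v * (\<Sum>s\<in>Mb (2 * N). f s * (if s = None then mon v w else 0)))"
  proof (rule sum.cong[OF refl], rule arg_cong[where f="\<lambda>x. _ * x"], rule sum.cong[OF refl])
    fix v s :: "'v mon"
    have vanish: "cm s (p, u) * X p u v = 0" if "deg p > N \<or> deg u > N \<or> deg p > deg s \<or> deg u > deg s" for p u
    proof (cases "X p u v = 0")
      case False
      then have "deg p + deg u + deg v = deg w" using mon_Dc_vanish[of p u v w, where 'a='a] by (simp add: X_def)
      then have "deg p \<le> N \<and> deg u \<le> N" by (auto simp: N_def)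
      with that have "deg p > deg s \<or> deg u > deg s" by auto
      have "\<not> (cm s (p, u) \<noteq> (0::'a))"
      proof
        assume "cm s (p, u) \<noteq> (0::'a)"
        then have "deg p \<le> deg s \<and> deg u \<le> deg s" by (rule cm_nz_deg_le)
        with \<open>deg p > deg s \<or> deg u > deg s\<close> show False by auto
      qed
      then show ?thesis by simp
    qed simp
    have "(\<Sum>p\<in>Mb N. \<Sum>u\<in>Mb N. cm s (p, u) * X p u v) = (\<Sum>p\<in>Mb N. \<Sum>u\<in>Mb (deg s). cm s (p, u) * X p u v)"
      by (rule sum.cong[OF refl], rule sum_Mb_eq) (use vanish in auto)
    also have "\<dots> = (\<Sum>p\<in>Mb (deg s). \<Sum>u\<in>Mb (deg s). cm s (p, u) * X p u v)"
      by (rule sum_Mb_eq[symmetric]) (use vanish in \<open>auto intro!: sum.neutral\<close>)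
    also have "\<dots> = (if s = None then mon v w else 0)"
      using C2_zero[of s v w, where 'a='a] by (simp add: C2_def X_def)
    finally show "f s * (\<Sum>p\<in>Mb N. \<Sum>u\<in>Mb N. cm s (p, u) * X p u v) = f s * (if s = None then mon v w else 0)"
      by simp
  qed
  also have "\<dots> = (\<Sum>v\<in>Mb N. g v * mon v w)"
    by (rule sum.cong[OF refl]) (simp add: if_distrib f1 cong: if_cong)
  also have "\<dots> = g w"
    by (simp add: mon_def N_def eq_commute[of w] sum_mult_ind)
  finally show ?thesis .
qed


definition zc :: "('v \<Rightarrow> ('w, 'a::zero) ser) \<Rightarrow> bool" where
  "zc \<sigma> \<longleftrightarrow> (\<forall>v. \<sigma> v None = 0)"

lemma eval_tree_None: "zc \<sigma> \<Longrightarrow> eval_tree \<sigma> t None = 0"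
  by (induction t) (auto simp: zc_def ser_mult_None)

lemma eval_tree_vanish: "zc \<sigma> \<Longrightarrow> deg w < tdeg t \<Longrightarrow> eval_tree \<sigma> t w = 0"
proof (induction t arbitrary: w)
  case (MLeaf v) then show ?case by (auto simp: zc_def deg_zero_iff)
next
  case (MNode a b)
  show ?case unfolding eval_tree.simps ser_mult_dec
  proof (rule sum.neutral, rule ballI)
    fix q assume q: "q \<in> dec w"
    obtain u1 u2 where q': "q = (u1, u2)" by fastforce
    with q have "deg u1 + deg u2 = deg w" using dec_deg by blast
    with MNode.prems have "deg u1 < tdeg a \<or> deg u2 < tdeg b" by auto
    then show "(case q of (u, v) \<Rightarrow> eval_tree \<sigma> a u * eval_tree \<sigma> b v) = 0"
      using MNode.IH MNode.prems(1) q' by auto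
  qed
qed

lemma eval_mon_vanish: "zc \<sigma> \<Longrightarrow> deg w < deg m \<Longrightarrow> eval_mon \<sigma> m w = 0"
  by (cases m) (auto simp: eval_mon_def deg_def eval_tree_vanish)

lemma eval_mon_None[simp]: "eval_mon \<sigma> None = mon None" by (simp add: eval_mon_def)
lemma eval_mon_Some[simp]: "eval_mon \<sigma> (Some t) = eval_tree \<sigma> t" by (simp add: eval_mon_def)

lemma subst_box:
  fixes \<sigma> :: "'v::finite \<Rightarrow> ('w, 'a::comm_ring_1) ser"
  assumes "zc \<sigma>" "deg w \<le> N"
  shows "subst \<sigma> f w = (\<Sum>m\<in>Mb N. f m * eval_mon \<sigma> m w)"
proof -
  have "subst \<sigma> f w = (\<Sum>m\<in>Mb (deg w). f m * eval_mon \<sigma> m w)" by (simp add: subst_def Mb_def)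
  also have "\<dots> = (\<Sum>m\<in>Mb N. f m * eval_mon \<sigma> m w)"
    by (rule sum_Mb_mono[symmetric]) (use assms eval_mon_vanish[OF assms(1)] in auto)
  finally show ?thesis .
qed

lemma ser_mult_unit_left: "ser_mult (mon None) g = (g :: ('v, 'a::comm_ring_1) ser)"
proof
  fix w
  have "ser_mult (mon None) g w = (\<Sum>q\<in>dec w. if q = (None, w) then g w else 0)"
    unfolding ser_mult_dec mon_def by (rule sum.cong) (auto simp: dec_def split: if_splits)
  also have "\<dots> = g w" by (subst sum.delta[OF finite_dec]) (simp add: dec_def)
  finally show "ser_mult (mon None) g w = g w" .
qed

lemma ser_mult_unit_right: "ser_mult f (mon None) = (f :: ('v, 'a::comm_ring_1) ser)"
proof
  fix w
  have "ser_mult f (mon None) w = (\<Sum>q\<in>dec w. if q = (w, None) then f w else 0)"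
    unfolding ser_mult_dec mon_def by (rule sum.cong) (auto simp: dec_def split: if_splits)
  also have "\<dots> = f w" by (subst sum.delta[OF finite_dec]) (simp add: dec_def)
  finally show "ser_mult f (mon None) w = f w" .
qed

lemma eval_mon_mmul: "eval_mon \<sigma> (mmul p q) = ser_mult (eval_mon \<sigma> p) (eval_mon \<sigma> q)"
  by (cases p; cases q) (simp_all add: ser_mult_unit_left ser_mult_unit_right)

lemma sum_dec_reindex2:
  assumes "\<And>x1 x2. H x1 x2 \<noteq> 0 \<Longrightarrow> deg x1 + deg x2 \<le> N"
  shows "(\<Sum>x\<in>(Mb N :: 'v::finite mon set). \<Sum>(x1,x2)\<in>dec x. H x1 x2) = (\<Sum>x1\<in>Mb N. \<Sum>x2\<in>Mb N. (H x1 x2 :: 'a::comm_monoid_add))"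
    (is "?L = ?R")
proof -
  let ?S = "{p::('v::finite mon \<times> 'v mon). deg (fst p) + deg (snd p) \<le> N}"
  have fS: "finite ?S"
    by (rule finite_subset[of _ "Mb N \<times> Mb N"]) (auto intro: finite_cartesian_product)
  have "?L = (\<Sum>q\<in>Sigma (Mb N) dec. case snd q of (x1,x2) \<Rightarrow> H x1 x2)"
    by (subst sum.Sigma) (auto simp: case_prod_beta)
  also have "\<dots> = (\<Sum>p\<in>snd ` Sigma (Mb N) dec. case p of (x1,x2) \<Rightarrow> H x1 x2)"
    by (subst sum.reindex) (auto simp: inj_on_def dec_def)
  also have "snd ` Sigma (Mb N) dec = ?S"
    by (auto simp: dec_def image_iff)
  also have "(\<Sum>p\<in>?S. case p of (x1,x2) \<Rightarrow> H x1 x2) = (\<Sum>p\<in>Mb N \<times> Mb N. case p of (x1,x2) \<Rightarrow> H x1 x2)"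
    by (rule sum.mono_neutral_left) (use fS assms in \<open>auto intro: finite_cartesian_product\<close>)
  also have "\<dots> = ?R" by (simp add: sum.cartesian_product)
  finally show ?thesis .
qed

lemma subst_mult:
  fixes \<sigma> :: "'v::finite \<Rightarrow> ('w::finite, 'a::comm_ring_1) ser"
  assumes zs: "zc \<sigma>"
  shows "subst \<sigma> (ser_mult f g) = ser_mult (subst \<sigma> f) (subst \<sigma> g)"
proof
  fix w :: "'w mon"
  define N where "N = deg w"
  define E where "E m = eval_mon \<sigma> m" for m
  have "subst \<sigma> (ser_mult f g) w = (\<Sum>m\<in>Mb N. (\<Sum>(p, q)\<in>dec m. f p * g q) * E m w)"
    using subst_box[OF zs, of w N "ser_mult f g"] by (simp add: N_def ser_mult_dec E_def)
  also have "\<dots> = (\<Sum>m\<in>Mb N. \<Sum>(p, q)\<in>dec m. f p * g q * E (mmul p q) w)"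
    by (rule sum.cong[OF refl]) (auto simp: sum_distrib_right dec_def intro!: sum.cong)
  also have "\<dots> = (\<Sum>p\<in>Mb N. \<Sum>q\<in>Mb N. f p * g q * E (mmul p q) w)"
  proof (rule sum_dec_reindex2)
    fix p q assume "f p * g q * E (mmul p q) w \<noteq> 0"
    then have "E (mmul p q) w \<noteq> 0" by auto
    then show "deg p + deg q \<le> N" using eval_mon_vanish[OF zs, of w "mmul p q"] by (force simp: E_def N_def)
  qed
  also have "\<dots> = (\<Sum>p\<in>Mb N. \<Sum>q\<in>Mb N. f p * g q * (\<Sum>(u, v)\<in>dec w. E p u * E q v))"
    by (simp add: E_def eval_mon_mmul ser_mult_dec)
  also have "\<dots> = (\<Sum>(u, v)\<in>dec w. (\<Sum>p\<in>Mb N. f p * E p u) * (\<Sum>q\<in>Mb N. g q * E q v))"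
  proof -
    have "(\<Sum>p\<in>Mb N. \<Sum>q\<in>Mb N. f p * g q * (\<Sum>(u, v)\<in>dec w. E p u * E q v)) =
          (\<Sum>p\<in>Mb N. \<Sum>q\<in>Mb N. \<Sum>x\<in>dec w. f p * E p (fst x) * (g q * E q (snd x)))"
      by (simp add: sum_distrib_left case_prod_beta mult_ac)
    also have "\<dots> = (\<Sum>x\<in>dec w. \<Sum>p\<in>Mb N. \<Sum>q\<in>Mb N. f p * E p (fst x) * (g q * E q (snd x)))"
      by (rule trans[OF sum.cong[OF refl sum.swap] sum.swap])
    also have "\<dots> = (\<Sum>(u, v)\<in>dec w. (\<Sum>p\<in>Mb N. f p * E p u) * (\<Sum>q\<in>Mb N. g q * E q v))"
      by (simp add: sum_product case_prod_beta)
    finally show ?thesis .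
  qed
  also have "\<dots> = ser_mult (subst \<sigma> f) (subst \<sigma> g) w"
    unfolding ser_mult_dec
  proof (rule sum.cong[OF refl])
    fix x assume "x \<in> dec w"
    then have "deg (fst x) \<le> N" "deg (snd x) \<le> N" using dec_deg[of "fst x" "snd x" w] by (auto simp: N_def)
    then show "(case x of (u, v) \<Rightarrow> (\<Sum>p\<in>Mb N. f p * E p u) * (\<Sum>q\<in>Mb N. g q * E q v)) =
               (case x of (u, v) \<Rightarrow> subst \<sigma> f u * subst \<sigma> g v)"
      by (simp add: case_prod_beta subst_box[OF zs] E_def)
  qed
  finally show "subst \<sigma> (ser_mult f g) w = ser_mult (subst \<sigma> f) (subst \<sigma> g) w" .
qed


lemma Mb_0: "Mb 0 = {None}" by (auto simp: deg_zero_iff)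

lemma subst_None:
  fixes \<sigma> :: "'v::finite \<Rightarrow> ('w, 'a::comm_ring_1) ser"
  assumes "zc \<sigma>" shows "subst \<sigma> g None = g None"
proof -
  have "subst \<sigma> g None = (\<Sum>m\<in>Mb 0. g m * eval_mon \<sigma> m None)" by (rule subst_box[OF assms]) simp
  then show ?thesis by (simp add: Mb_0 mon_def)
qed

lemma zc_comp:
  fixes \<sigma> :: "'v::finite \<Rightarrow> ('w, 'a::comm_ring_1) ser"
  assumes "zc \<sigma>" "zc \<tau>" shows "zc (\<lambda>v. subst \<sigma> (\<tau> v))"
  using assms by (simp add: zc_def subst_None)

lemma subst_mon_None:
  fixes \<sigma> :: "'v::finite \<Rightarrow> ('w, 'a::comm_ring_1) ser"
  assumes zs: "zc \<sigma>" shows "subst \<sigma> (mon None) = mon None"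
proof
  fix w
  have "subst \<sigma> (mon None) w = (\<Sum>m\<in>Mb (deg w). (if m = None then 1 else 0) * eval_mon \<sigma> m w)"
    by (simp add: subst_box[OF zs order.refl] mon_def)
  also have "\<dots> = mon None w" by (simp add: mon_def[of None] sum_ind_mult)
  finally show "subst \<sigma> (mon None) w = mon None w" .
qed

lemma subst_eval_tree:
  fixes \<sigma> :: "'v::finite \<Rightarrow> ('w::finite, 'a::comm_ring_1) ser"
  assumes zs: "zc \<sigma>"
  shows "subst \<sigma> (eval_tree \<tau> t) = eval_tree (\<lambda>v. subst \<sigma> (\<tau> v)) t"
  by (induction t) (simp_all add: subst_mult[OF zs])

lemma subst_eval_mon:
  fixes \<sigma> :: "'v::finite \<Rightarrow> ('w::finite, 'a::comm_ring_1) ser"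
  assumes zs: "zc \<sigma>"
  shows "subst \<sigma> (eval_mon \<tau> m) = eval_mon (\<lambda>v. subst \<sigma> (\<tau> v)) m"
  by (cases m) (simp_all add: subst_eval_tree[OF zs] subst_mon_None[OF zs])

lemma subst_comp:
  fixes \<sigma> :: "'v::finite \<Rightarrow> ('w::finite, 'a::comm_ring_1) ser" and \<tau> :: "'u::finite \<Rightarrow> ('v, 'a) ser"
  assumes zs: "zc \<sigma>" and zt: "zc \<tau>"
  shows "subst \<sigma> (subst \<tau> f) = subst (\<lambda>v. subst \<sigma> (\<tau> v)) f"
proof
  fix w :: "'w mon"
  define N where "N = deg w"
  have "subst \<sigma> (subst \<tau> f) w = (\<Sum>n\<in>Mb N. subst \<tau> f n * eval_mon \<sigma> n w)"
    by (rule subst_box[OF zs]) (simp add: N_def)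
  also have "\<dots> = (\<Sum>n\<in>Mb N. (\<Sum>m\<in>Mb N. f m * eval_mon \<tau> m n) * eval_mon \<sigma> n w)"
    by (rule sum.cong[OF refl]) (simp add: subst_box[OF zt])
  also have "\<dots> = (\<Sum>n\<in>Mb N. \<Sum>m\<in>Mb N. f m * (eval_mon \<tau> m n * eval_mon \<sigma> n w))"
    by (rule sum.cong[OF refl]) (simp add: sum_distrib_right mult.assoc)
  also have "\<dots> = (\<Sum>m\<in>Mb N. \<Sum>n\<in>Mb N. f m * (eval_mon \<tau> m n * eval_mon \<sigma> n w))"
    by (rule sum.swap)
  also have "\<dots> = (\<Sum>m\<in>Mb N. f m * (\<Sum>n\<in>Mb N. eval_mon \<tau> m n * eval_mon \<sigma> n w))"
    by (simp add: sum_distrib_left)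
  also have "\<dots> = (\<Sum>m\<in>Mb N. f m * subst \<sigma> (eval_mon \<tau> m) w)"
    by (rule sum.cong[OF refl]) (simp add: subst_box[OF zs, of w N] N_def)
  also have "\<dots> = (\<Sum>m\<in>Mb N. f m * eval_mon (\<lambda>v. subst \<sigma> (\<tau> v)) m w)"
    by (simp add: subst_eval_mon[OF zs])
  also have "\<dots> = subst (\<lambda>v. subst \<sigma> (\<tau> v)) f w"
    by (rule subst_box[symmetric, OF zc_comp[OF zs zt]]) (simp add: N_def)
  finally show "subst \<sigma> (subst \<tau> f) w = subst (\<lambda>v. subst \<sigma> (\<tau> v)) f w" .
qed

lemma subst_var:
  fixes \<sigma> :: "'v::finite \<Rightarrow> ('w, 'a::comm_ring_1) ser"
  assumes zs: "zc \<sigma>" shows "subst \<sigma> (var v) = \<sigma> v"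
proof
  fix w
  have "subst \<sigma> (var v) w = (\<Sum>m\<in>Mb (deg w + 1). (if m = Some (MLeaf v) then 1 else 0) * eval_mon \<sigma> m w)"
    by (simp add: subst_box[OF zs, of w "deg w + 1"] var_def mon_def)
  also have "\<dots> = \<sigma> v w" by (simp add: sum_ind_mult deg_def)
  finally show "subst \<sigma> (var v) w = \<sigma> v w" .
qed

lemma subst_add: "subst \<sigma> (\<lambda>w. f w + g w) = (\<lambda>w. subst \<sigma> f w + subst \<sigma> g w)"
  by (simp add: subst_def fun_eq_iff distrib_right sum.distrib)


definition rnm :: "unit mon \<Rightarrow> xy mon" where "rnm = map_option (map_ntree (\<lambda>_. X))"

lemma map_ntree_inj: "map_ntree (\<lambda>_::unit. X) s = map_ntree (\<lambda>_. X) t \<Longrightarrow> s = t"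
proof (induction s arbitrary: t)
  case (MLeaf v) then show ?case by (cases t) auto
next
  case (MNode a b) then show ?case by (cases t) auto
qed

lemma inj_rnm: "inj rnm"
proof (rule injI)
  fix x y assume "rnm x = rnm y"
  then show "x = y" by (cases x; cases y) (auto simp: rnm_def intro: map_ntree_inj)
qed

lemma rnm_None[simp]: "rnm None = None" by (simp add: rnm_def)
lemma tdeg_map: "tdeg (map_ntree g t) = tdeg t" by (induction t) auto
lemma deg_rnm[simp]: "deg (rnm m) = deg m" by (cases m) (auto simp: rnm_def deg_def tdeg_map)
lemma rnm_mmul: "rnm (mmul x y) = mmul (rnm x) (rnm y)"
  by (cases x; cases y) (auto simp: rnm_def)

lemma rnm_eq_None: "rnm m = None \<longleftrightarrow> m = None" by (cases m) (auto simp: rnm_def)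

lemma mmul_in_range:
  assumes "mmul p q \<in> range rnm" shows "p \<in> range rnm \<and> q \<in> range rnm"
proof -
  obtain m where m: "mmul p q = rnm m" using assms by auto
  show ?thesis
  proof (cases p)
    case None then show ?thesis using m by (auto intro: range_eqI[of _ _ None])
  next
    case (Some s)
    show ?thesis
    proof (cases q)
      case None then show ?thesis using m Some by (auto intro: range_eqI[of _ _ None])
    next
      case (Some t')
      with \<open>p = Some s\<close> m obtain u where "m = Some u" "map_ntree (\<lambda>_. X) u = MNode s t'"
        by (cases m) (auto simp: rnm_def)
      then obtain u1 u2 where "u = MNode u1 u2" "s = map_ntree (\<lambda>_. X) u1" "t' = map_ntree (\<lambda>_. X) u2"
        by (cases u) auto
      then show ?thesis using \<open>p = Some s\<close> Some
        by (auto simp: rnm_def intro: range_eqI[of _ _ "Some u1"] range_eqI[of _ _ "Some u2"])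
    qed
  qed
qed

lemma dec_rnm: "dec (rnm a) = (\<lambda>(x, y). (rnm x, rnm y)) ` dec a"
proof
  show "dec (rnm a) \<subseteq> (\<lambda>(x, y). (rnm x, rnm y)) ` dec a"
  proof
    fix q assume "q \<in> dec (rnm a)"
    then obtain x y where q: "q = (x, y)" "mmul x y = rnm a" by (auto simp: dec_def)
    then have "x \<in> range rnm" "y \<in> range rnm" using mmul_in_range[of x y] by auto
    then obtain x' y' where xy: "x = rnm x'" "y = rnm y'" by blast
    then have "rnm (mmul x' y') = rnm a" using q(2) by (simp add: rnm_mmul)
    then have "mmul x' y' = a" using inj_rnm by (simp add: inj_eq)
    then have "(x', y') \<in> dec a" by (simp add: dec_def)
    then show "q \<in> (\<lambda>(x, y). (rnm x, rnm y)) ` dec a"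
      using q(1) xy by (auto intro: rev_image_eqI)
  qed
  show "(\<lambda>(x, y). (rnm x, rnm y)) ` dec a \<subseteq> dec (rnm a)"
    by (auto simp: dec_def rnm_mmul)
qed

lemma rnm_eq_iff[simp]: "rnm x = rnm y \<longleftrightarrow> x = y"
  using inj_rnm by (auto dest: injD)

lemma inj_on_rnm2: "inj_on (\<lambda>(x, y). (rnm x, rnm y)) A"
proof (rule inj_onI)
  fix p q assume "(\<lambda>(x, y). (rnm x, rnm y)) p = (\<lambda>(x, y). (rnm x, rnm y)) q"
  then show "p = q" by (cases p, cases q) simp
qed

lemma cm_rnm_tree: "(cm (rnm (Some t)) (rnm a, rnm b) :: 'a::comm_ring_1) = cm (Some t) (a, b)"
proof (induction t arbitrary: a b)
  case (MLeaf v)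
  have e: "rnm (Some (MLeaf v)) = Some (MLeaf X)" by (simp add: rnm_def)
  have f: "rnm a = Some (MLeaf X) \<longleftrightarrow> a = Some (MLeaf v)" for a
    by (simp only: e[symmetric] rnm_eq_iff)
  show ?case unfolding e cm_leaf f rnm_eq_None ..
next
  case (MNode s t)
  have "(cm (rnm (Some (MNode s t))) (rnm a, rnm b) :: 'a) =
        (\<Sum>p\<in>dec (rnm a). \<Sum>q\<in>dec (rnm b). cm (rnm (Some s)) (fst p, fst q) * cm (rnm (Some t)) (snd p, snd q))"
    by (simp add: rnm_def cm_node tmult_dec)
  also have "\<dots> = (\<Sum>p\<in>dec a. \<Sum>q\<in>dec b. cm (rnm (Some s)) (rnm (fst p), rnm (fst q)) * cm (rnm (Some t)) (rnm (snd p), rnm (snd q)))"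
    unfolding dec_rnm
    by (simp only: sum.reindex[OF inj_on_rnm2]) (simp add: case_prod_beta comp_def)
  also have "\<dots> = cm (Some (MNode s t)) (a, b)"
    by (simp add: MNode.IH cm_node tmult_dec)
  finally show ?case .
qed

lemma cm_rnm: "(cm (rnm u) (rnm a, rnm b) :: 'a::comm_ring_1) = cm u (a, b)"
  by (cases u) (auto simp: cm_rnm_tree cm_None rnm_eq_None)

lemma cm_rnm_range_tree: "(cm (rnm (Some t)) (a, b) :: 'a::comm_ring_1) \<noteq> 0 \<Longrightarrow> a \<in> range rnm \<and> b \<in> range rnm"
proof (induction t arbitrary: a b)
  case (MLeaf v) then show ?case
    by (auto simp: rnm_def cm_leaf split: if_splits intro: range_eqI[of _ _ None] range_eqI[of _ _ "Some (MLeaf ())"])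
next
  case (MNode s t)
  from MNode.prems have "(\<Sum>p\<in>dec a. \<Sum>q\<in>dec b. cm (rnm (Some s)) (fst p, fst q) * cm (rnm (Some t)) (snd p, snd q)) \<noteq> (0::'a)"
    by (simp add: rnm_def cm_node tmult_dec)
  then obtain p where p: "p \<in> dec a" "(\<Sum>q\<in>dec b. cm (rnm (Some s)) (fst p, fst q) * cm (rnm (Some t)) (snd p, snd q)) \<noteq> (0::'a)"
    by (rule sum.not_neutral_contains_not_neutral)
  from p(2) obtain q where q: "q \<in> dec b" "cm (rnm (Some s)) (fst p, fst q) * cm (rnm (Some t)) (snd p, snd q) \<noteq> (0::'a)"
    by (rule sum.not_neutral_contains_not_neutral)
  have c1: "cm (rnm (Some s)) (fst p, fst q) \<noteq> (0::'a)" and c2: "cm (rnm (Some t)) (snd p, snd q) \<noteq> (0::'a)"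
    using q(2) by auto
  from MNode.IH(1)[OF c1] MNode.IH(2)[OF c2] obtain x1 x2 y1 y2 where
    "fst p = rnm x1" "snd p = rnm x2" "fst q = rnm y1" "snd q = rnm y2" by blast
  then have "a = rnm (mmul x1 x2)" "b = rnm (mmul y1 y2)"
    using p(1) q(1) by (auto simp: dec_def rnm_mmul case_prod_beta)
  then show ?case by blast
qed

lemma cm_rnm_range: "(cm (rnm u) (a, b) :: 'a::comm_ring_1) \<noteq> 0 \<Longrightarrow> a \<in> range rnm \<and> b \<in> range rnm"
  by (cases u) (auto simp: cm_rnm_range_tree cm_None split: if_splits intro: range_eqI[of _ _ None])


lemma zc_const_var: "zc (\<lambda>_. var c)" by (simp add: zc_def var_def mon_def)

lemma eval_tree_const_var: "(eval_tree (\<lambda>_. var c) t :: ('w, 'a::comm_ring_1) ser) = mon (Some (map_ntree (\<lambda>_. c) t))"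
  by (induction t) (simp_all add: var_def ser_mult_mon)

lemma eval_mon_X: "(eval_mon (\<lambda>_. var X) m :: (xy, 'a::comm_ring_1) ser) = mon (rnm m)"
  by (cases m) (simp_all add: eval_tree_const_var rnm_def)

definition Ebase :: "(unit, 'a::comm_ring_1) ser \<Rightarrow> (xy, 'a) ser" where "Ebase e = apply_base e (var X)"

lemma Ebase_box: "deg w \<le> N \<Longrightarrow> Ebase e w = (\<Sum>m\<in>Mb N. e m * mon (rnm m) w)"
  unfolding Ebase_def apply_base_def by (simp add: subst_box[OF zc_const_var] eval_mon_X)

lemma Ebase_rnm: "Ebase e (rnm m0) = e m0"
proof -
  have "Ebase e (rnm m0) = (\<Sum>m\<in>Mb (deg m0). e m * (if m = m0 then 1 else 0))"
    by (simp add: Ebase_box[OF order.refl] mon_def eq_commute[of m0])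
  also have "\<dots> = e m0" by (simp add: sum_mult_ind)
  finally show ?thesis .
qed

lemma Ebase_nrange: "w \<notin> range rnm \<Longrightarrow> Ebase e w = 0"
  by (simp add: Ebase_box[OF order.refl] mon_def) (auto intro!: sum.neutral)

lemma Ebase_None: "Ebase e None = e None"
  using Ebase_rnm[of e None] by simp

lemma Ebase_group_like:
  fixes e :: "(unit, 'a::comm_ring_1) ser"
  assumes gl: "coprod e = tensor e e"
  shows "coprod (Ebase e) = tensor (Ebase e) (Ebase e)"
proof (intro ext, clarify)
  fix a b :: "xy mon"
  define n where "n = deg a + deg b"
  have cE: "coprod (Ebase e) (a, b) = (\<Sum>w\<in>{w. deg w = n}. Ebase e w * cm w (a, b))"
    by (simp add: coprod_def n_def)
  show "coprod (Ebase e) (a, b) = tensor (Ebase e) (Ebase e) (a, b)"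
  proof (cases "a \<in> range rnm \<and> b \<in> range rnm")
    case False
    have "Ebase e w * cm w (a, b) = 0" for w
    proof (cases "w \<in> range rnm")
      case True
      then obtain m where m: "w = rnm m" by blast
      have "\<not> (cm (rnm m) (a, b) \<noteq> (0::'a))"
      proof
        assume "cm (rnm m) (a, b) \<noteq> (0::'a)"
        then have "a \<in> range rnm \<and> b \<in> range rnm" by (rule cm_rnm_range)
        with False show False by blast
      qed
      then show ?thesis using m by simp
    qed (simp add: Ebase_nrange)
    then have "coprod (Ebase e) (a, b) = 0" unfolding cE by simp
    moreover have "Ebase e a * Ebase e b = 0" using False Ebase_nrange[of a e] Ebase_nrange[of b e] by auto
    ultimately show ?thesis by (simp add: tensor_def)
  next
    case True
    then obtain a' b' where ab: "a = rnm a'" "b = rnm b'" by blast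
    have fin: "finite {w::xy mon. deg w = n}" by (rule finite_subset[of _ "Mb n"]) auto
    have "(\<Sum>w\<in>{w. deg w = n}. Ebase e w * cm w (a, b)) = (\<Sum>w\<in>rnm ` {m. deg m = n}. Ebase e w * cm w (a, b))"
    proof (rule sum.mono_neutral_right[OF fin])
      show "rnm ` {m. deg m = n} \<subseteq> {w. deg w = n}" by auto
      show "\<forall>i\<in>{w. deg w = n} - rnm ` {m. deg m = n}. Ebase e i * cm i (a, b) = 0"
      proof
        fix i assume i: "i \<in> {w. deg w = n} - rnm ` {m. deg m = n}"
        then have "i \<notin> range rnm" by auto
        then show "Ebase e i * cm i (a, b) = 0" by (simp add: Ebase_nrange)
      qed
    qed
    also have "\<dots> = (\<Sum>m\<in>{m. deg m = n}. e m * cm m (a', b'))"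
      by (subst sum.reindex) (auto simp: inj_on_def Ebase_rnm ab cm_rnm)
    also have "\<dots> = coprod e (a', b')" by (simp add: coprod_def n_def ab)
    also have "\<dots> = e a' * e b'" using gl by (simp add: tensor_def)
    finally show ?thesis unfolding cE by (simp add: tensor_def ab Ebase_rnm)
  qed
qed


lemma ydeg_None[simp]: "ydeg None = 0" by (simp add: ydeg_def)
lemma ydeg_Some: "ydeg (Some t) = ydeg_tree t" by (simp add: ydeg_def)
lemma ydeg_mmul[simp]: "ydeg (mmul a b) = ydeg a + ydeg b"
  by (cases a; cases b) (auto simp: ydeg_def)
lemma ydeg_tree_le: "ydeg_tree t \<le> tdeg t" by (induction t) auto
lemma ydeg_le_deg: "ydeg w \<le> deg w" by (cases w) (auto simp: ydeg_def deg_def ydeg_tree_le)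

lemma dec_ydeg: "(u, v) \<in> dec w \<Longrightarrow> ydeg u + ydeg v = ydeg w"
  by (auto simp: dec_def)

section \<open>Projection to ydeg 0\<close>

definition rho :: "xy \<Rightarrow> (xy, 'a::comm_ring_1) ser" where
  "rho v = (if v = X then var X else (\<lambda>_. 0))"

lemma zc_rho: "zc rho" by (simp add: zc_def rho_def var_def mon_def)

lemma ser_mult_zero_left: "ser_mult (\<lambda>_. 0) g = (\<lambda>_. 0)" by (simp add: ser_mult_dec fun_eq_iff)
lemma ser_mult_zero_right: "ser_mult f (\<lambda>_. 0) = (\<lambda>_. 0)" by (simp add: ser_mult_dec fun_eq_iff)

lemma eval_tree_rho: "(eval_tree rho t :: (xy, 'a::comm_ring_1) ser) = (if ydeg_tree t = 0 then mon (Some t) else (\<lambda>_. 0))"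
proof (induction t)
  case (MLeaf v) then show ?case by (cases v) (auto simp: rho_def var_def)
next
  case (MNode a b) then show ?case
    by (auto simp: ser_mult_zero_left ser_mult_zero_right ser_mult_mon)
qed

lemma eval_mon_rho: "(eval_mon rho m :: (xy, 'a::comm_ring_1) ser) = (if ydeg m = 0 then mon m else (\<lambda>_. 0))"
  by (cases m) (auto simp: eval_tree_rho ydeg_def)

lemma eval_mon_rho_apply: "(eval_mon rho m w :: 'a::comm_ring_1) = (if ydeg m = 0 then mon m w else 0)"
  by (simp add: eval_mon_rho)

lemma subst_rho: "subst rho F w = (if ydeg w = 0 then F w else (0::'a::comm_ring_1))"
proof -
  have "subst rho F w = (\<Sum>m\<in>Mb (deg w). F m * (if ydeg m = 0 then mon m w else 0))"
    by (simp add: subst_box[OF zc_rho order.refl] eval_mon_rho_apply)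
  also have "\<dots> = (\<Sum>m\<in>Mb (deg w). if m = w then (if ydeg w = 0 then F w else 0) else 0)"
    by (rule sum.cong) (auto simp: mon_def)
  also have "\<dots> = (if ydeg w = 0 then F w else 0)" by simp
  finally show ?thesis .
qed

section \<open>Locality\<close>

lemma eval_local:
  assumes "\<And>v w'. deg w' \<le> n \<Longrightarrow> ydeg w' \<le> k \<Longrightarrow> \<sigma> v w' = \<sigma>' v w'"
  shows "deg w \<le> n \<Longrightarrow> ydeg w \<le> k \<Longrightarrow> eval_tree \<sigma> t w = (eval_tree \<sigma>' t w :: 'a::comm_ring_1)"
proof (induction t arbitrary: w)
  case (MLeaf v) then show ?case using assms by simp
next
  case (MNode a b)
  show ?case unfolding eval_tree.simps ser_mult_dec
  proof (rule sum.cong[OF refl])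
    fix q assume q: "q \<in> dec w"
    obtain u1 u2 where q': "q = (u1, u2)" by fastforce
    have "deg u1 \<le> n" "deg u2 \<le> n" "ydeg u1 \<le> k" "ydeg u2 \<le> k"
      using dec_deg[of u1 u2 w] dec_ydeg[of u1 u2 w] q q' MNode.prems by auto
    then show "(case q of (u, v) \<Rightarrow> eval_tree \<sigma> a u * eval_tree \<sigma> b v) = (case q of (u, v) \<Rightarrow> eval_tree \<sigma>' a u * eval_tree \<sigma>' b v)"
      using MNode.IH q' by simp
  qed
qed

lemma eval_local_node:
  fixes \<sigma> \<sigma>' :: "'v \<Rightarrow> (xy, 'a::comm_ring_1) ser"
  assumes "zc \<sigma>" "zc \<sigma>'"
    and agree: "\<And>v w'. deg w' < deg w \<Longrightarrow> ydeg w' \<le> ydeg w \<Longrightarrow> \<sigma> v w' = \<sigma>' v w'"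
  shows "eval_tree \<sigma> (MNode a b) w = eval_tree \<sigma>' (MNode a b) w"
  unfolding eval_tree.simps ser_mult_dec
proof (rule sum.cong[OF refl])
  fix q assume q: "q \<in> dec w"
  obtain u1 u2 where q': "q = (u1, u2)" by fastforce
  show "(case q of (u, v) \<Rightarrow> eval_tree \<sigma> a u * eval_tree \<sigma> b v) = (case q of (u, v) \<Rightarrow> eval_tree \<sigma>' a u * eval_tree \<sigma>' b v)"
  proof (cases "u1 = None \<or> u2 = None")
    case True then show ?thesis using q' eval_tree_None[OF assms(1)] eval_tree_None[OF assms(2)] by auto
  next
    case False
    then have "deg u1 \<ge> 1" "deg u2 \<ge> 1" using deg_zero_iff by (auto simp: Suc_le_eq)
    moreover have "deg u1 + deg u2 = deg w" "ydeg u1 + ydeg u2 = ydeg w"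
      using dec_deg[of u1 u2 w] dec_ydeg[of u1 u2 w] q q' by auto
    ultimately have le: "deg u1 \<le> deg w - 1" "deg u2 \<le> deg w - 1" "ydeg u1 \<le> ydeg w" "ydeg u2 \<le> ydeg w" by auto
    have ag: "\<And>v w'. deg w' \<le> deg w - 1 \<Longrightarrow> ydeg w' \<le> ydeg w \<Longrightarrow> \<sigma> v w' = \<sigma>' v w'"
    proof -
      fix v w' assume "deg w' \<le> deg w - 1" "ydeg w' \<le> ydeg w"
      moreover have "deg w \<ge> 1" using \<open>deg u1 \<ge> 1\<close> \<open>deg u1 + deg u2 = deg w\<close> by linarith
      ultimately show "\<sigma> v w' = \<sigma>' v w'" by (intro agree) auto
    qed
    show ?thesis using q' eval_local[OF ag le(1,3), where t=a] eval_local[OF ag le(2,4), where t=b] by simp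
  qed
qed


section \<open>Recursive solutions\<close>

definition local_op :: "((xy, 'a::comm_ring_1) ser \<Rightarrow> xy mon \<Rightarrow> 'a) \<Rightarrow> bool" where
  "local_op G \<longleftrightarrow> (\<forall>u u' w. u None = 0 \<longrightarrow> u' None = 0 \<longrightarrow>
      (\<forall>w'. deg w' < deg w \<longrightarrow> ydeg w' \<le> ydeg w \<longrightarrow> u w' = u' w') \<longrightarrow> G u w = G u' w)"

lemma local_opD: "local_op G \<Longrightarrow> u None = 0 \<Longrightarrow> u' None = 0 \<Longrightarrow>
   (\<And>w'. deg w' < deg w \<Longrightarrow> ydeg w' \<le> ydeg w \<Longrightarrow> u w' = u' w') \<Longrightarrow> G u w = G u' w"
  unfolding local_op_def by blast

lemma rec_unique_on:
  assumes G: "local_op G" and u0: "u None = 0" and u'0: "u' None = 0"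
    and eq: "\<And>w. w \<noteq> None \<Longrightarrow> ydeg w \<le> K \<Longrightarrow> u w + G u w = u' w + G u' w"
  shows "ydeg w \<le> K \<Longrightarrow> u w = u' w"
proof (induction "deg w" arbitrary: w rule: less_induct)
  case less
  show ?case
  proof (cases "w = None")
    case True then show ?thesis using u0 u'0 by simp
  next
    case False
    have "G u w = G u' w"
    proof (rule local_opD[where u=u and u'=u', OF G u0 u'0])
      fix w' :: "xy mon" assume "deg w' < deg w" "ydeg w' \<le> ydeg w"
      then show "u w' = u' w'" using less.prems by (intro less.hyps) auto
    qed
    then show ?thesis using eq[OF False less.prems] by simp
  qed
qed

lemma rec_unique:
  assumes G: "local_op G" and u0: "u None = 0" and u'0: "u' None = 0"
    and eq: "\<And>w. w \<noteq> None \<Longrightarrow> u w + G u w = u' w + G u' w"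
  shows "u = u'"
proof
  fix w
  show "u w = u' w"
    by (rule rec_unique_on[where u=u and u'=u' and K="ydeg w", OF G u0 u'0]) (use eq in auto)
qed

fun rec_it :: "((xy, 'a::comm_ring_1) ser \<Rightarrow> xy mon \<Rightarrow> 'a) \<Rightarrow> (xy, 'a) ser \<Rightarrow> nat \<Rightarrow> (xy, 'a) ser" where
  "rec_it G f 0 = (\<lambda>_. 0)"
| "rec_it G f (Suc k) = (\<lambda>w. if w = None then 0 else f w - G (rec_it G f k) w)"

lemma rec_it_None: "rec_it G f k None = 0" by (cases k) auto

lemma rec_it_stable:
  assumes G: "local_op G"
  shows "deg w < k \<Longrightarrow> k \<le> j \<Longrightarrow> rec_it G f k w = rec_it G f j w"
proof (induction k arbitrary: w j)
  case 0 then show ?case by simp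
next
  case (Suc k)
  then obtain j' where j: "j = Suc j'" "k \<le> j'" by (cases j) auto
  have "G (rec_it G f k) w = G (rec_it G f j') w"
  proof (rule local_opD[where u="rec_it G f k" and u'="rec_it G f j'", OF G rec_it_None rec_it_None])
    fix w' :: "xy mon" assume "deg w' < deg w"
    then have "deg w' < k" using Suc.prems by simp
    then show "rec_it G f k w' = rec_it G f j' w'" using j(2) by (rule Suc.IH)
  qed
  then show ?case using j by simp
qed

lemma rec_exists:
  assumes G: "local_op G"
  shows "\<exists>u. u None = 0 \<and> (\<forall>w. w \<noteq> None \<longrightarrow> u w + G u w = f w)"
proof -
  define u where "u w = rec_it G f (Suc (deg w)) w" for w
  have u0: "u None = 0" by (simp add: u_def)
  have "u w + G u w = f w" if "w \<noteq> None" for w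
  proof -
    have "G u w = G (rec_it G f (deg w)) w"
    proof (rule local_opD[where u=u and u'="rec_it G f (deg w)", OF G u0 rec_it_None])
      fix w' :: "xy mon" assume w': "deg w' < deg w"
      show "u w' = rec_it G f (deg w) w'"
        unfolding u_def by (rule rec_it_stable[OF G]) (use w' in auto)
    qed
    moreover have "u w = f w - G (rec_it G f (deg w)) w"
      unfolding u_def rec_it.simps if_not_P[OF that] ..
    ultimately show ?thesis by simp
  qed
  then show ?thesis using u0 by blast
qed

lemma rec_ex1:
  assumes G: "local_op G"
  shows "\<exists>!u. u None = 0 \<and> (\<forall>w. w \<noteq> None \<longrightarrow> u w + G u w = f w)"
proof -
  from rec_exists[OF G, of f] obtain u where u: "u None = 0 \<and> (\<forall>w. w \<noteq> None \<longrightarrow> u w + G u w = f w)"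
    by (elim exE)
  have uniq: "u' = u" if u': "u' None = 0 \<and> (\<forall>w. w \<noteq> None \<longrightarrow> u' w + G u' w = f w)" for u'
  proof (rule rec_unique[OF G])
    show "u' None = 0" using u' by (rule conjunct1)
    show "u None = 0" using u by (rule conjunct1)
    fix w :: "xy mon" assume w: "w \<noteq> None"
    have "u' w + G u' w = f w" using u' w by simp
    moreover have "u w + G u w = f w" using u w by simp
    ultimately show "u' w + G u' w = u w + G u w" by simp
  qed
  show ?thesis
  proof (rule ex1I[where a=u])
    show "u None = 0 \<and> (\<forall>w. w \<noteq> None \<longrightarrow> u w + G u w = f w)" by (rule u)
    fix u' assume "u' None = 0 \<and> (\<forall>w. w \<noteq> None \<longrightarrow> u' w + G u' w = f w)"
    then show "u' = u" by (rule uniq)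
  qed
qed


abbreviation lf :: "'v \<Rightarrow> 'v mon" where "lf v \<equiv> Some (MLeaf v)"

lemma deg_lf[simp]: "deg (lf v) = 1" by (simp add: deg_def)

lemma mon_cases: obtains "m = None" | v where "m = lf v" | a b where "m = Some (MNode a b)"
proof (cases m)
  case (Some t) then show ?thesis using that by (cases t) auto
qed (use that in auto)

definition Glog :: "(unit, 'a::comm_ring_1) ser \<Rightarrow> (xy, 'a) ser \<Rightarrow> xy mon \<Rightarrow> 'a" where
  "Glog e u w = (\<Sum>m\<in>Mb (deg w) - {lf ()}. e m * eval_mon (\<lambda>_. u) m w)"

lemma zc_const: "u None = 0 \<Longrightarrow> zc (\<lambda>_. u)" by (simp add: zc_def)

lemma apply_base_split:
  assumes u0: "u None = 0" and e1: "e (lf ()) = 1" and w: "w \<noteq> None"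
  shows "apply_base e u w = u w + Glog e u w"
proof -
  have lfin: "lf () \<in> Mb (deg w)" using w deg_zero_iff[of w] by auto
  have "apply_base e u w = e (lf ()) * eval_mon (\<lambda>_. u) (lf ()) w + Glog e u w"
    unfolding apply_base_def Glog_def subst_box[OF zc_const[where u=u, OF u0] order.refl]
    by (rule sum.remove[OF finite_Mb lfin])
  then show ?thesis using e1 by simp
qed

lemma apply_base_None:
  assumes u0: "u None = 0" shows "apply_base e u None = e None"
  unfolding apply_base_def by (rule subst_None[OF zc_const[where u=u, OF u0]])

lemma local_Glog: "local_op (Glog e)"
  unfolding local_op_def
proof (intro allI impI)
  fix u u' :: "(xy, 'a) ser" and w :: "xy mon"
  assume u0: "u None = 0" and u'0: "u' None = 0"
    and ag: "\<forall>w'. deg w' < deg w \<longrightarrow> ydeg w' \<le> ydeg w \<longrightarrow> u w' = u' w'"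
  show "Glog e u w = Glog e u' w"
    unfolding Glog_def
  proof (rule sum.cong[OF refl])
    fix m :: "unit mon" assume m: "m \<in> Mb (deg w) - {lf ()}"
    show "e m * eval_mon (\<lambda>_. u) m w = e m * eval_mon (\<lambda>_. u') m w"
    proof (cases m rule: mon_cases)
      case 1 then show ?thesis by simp
    next
      case (2 v) then show ?thesis using m by simp
    next
      case (3 a b)
      have "eval_tree (\<lambda>_. u) (MNode a b) w = eval_tree (\<lambda>_. u') (MNode a b) w"
        by (rule eval_local_node[OF zc_const[where u=u, OF u0] zc_const[where u=u', OF u'0]]) (use ag in auto)
      then show ?thesis using 3 by simp
    qed
  qed
qed

lemma log_base_spec:
  fixes e :: "(unit, 'a::comm_ring_1) ser" and f :: "(xy, 'a) ser"
  assumes e0: "e None = 1" and e1: "e (lf ()) = 1" and f0: "f None = 1"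
  shows "log_base e f None = 0 \<and> apply_base e (log_base e f) = f"
proof -
  have iff: "(u None = 0 \<and> apply_base e u = f) \<longleftrightarrow> (u None = 0 \<and> (\<forall>w. w \<noteq> None \<longrightarrow> u w + Glog e u w = f w))" for u :: "(xy, 'a) ser"
  proof
    assume A: "u None = 0 \<and> apply_base e u = f"
    then show "u None = 0 \<and> (\<forall>w. w \<noteq> None \<longrightarrow> u w + Glog e u w = f w)"
      using apply_base_split[where u=u and e=e, OF _ e1] by auto
  next
    assume A: "u None = 0 \<and> (\<forall>w. w \<noteq> None \<longrightarrow> u w + Glog e u w = f w)"
    have "apply_base e u w = f w" for w
    proof (cases "w = None")
      case True then show ?thesis using A apply_base_None[of u e] e0 f0 by simp
    next
      case False then show ?thesis using A apply_base_split[of u e w] e1 by simp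
    qed
    then show "u None = 0 \<and> apply_base e u = f" using A by auto
  qed
  have "\<exists>!u. u None = 0 \<and> apply_base e u = f"
    unfolding iff by (rule rec_ex1[OF local_Glog])
  then show ?thesis unfolding log_base_def by (rule theI')
qed

lemma log_base_unique_y1:
  fixes e :: "(unit, 'a::comm_ring_1) ser"
  assumes e1: "e (lf ()) = 1" and u0: "u None = 0" and u'0: "u' None = 0"
    and eq: "\<And>w. ydeg w \<le> 1 \<Longrightarrow> apply_base e u w = apply_base e u' w"
  shows "ydeg w \<le> 1 \<Longrightarrow> u w = u' w"
proof (rule rec_unique_on[where u=u and u'=u', OF local_Glog u0 u'0])
  fix w :: "xy mon" assume "w \<noteq> None" "ydeg w \<le> 1"
  then show "u w + Glog e u w = u' w + Glog e u' w"
    using eq[of w] apply_base_split[where u=u and e=e, OF u0 e1] apply_base_split[where u=u' and e=e, OF u'0 e1] by simp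
qed


definition sT :: "(xy, 'a::comm_ring_1) ser \<Rightarrow> xy \<Rightarrow> (xy, 'a) ser" where
  "sT T v = (if v = X then var X else T)"

lemma zc_sT: "T None = 0 \<Longrightarrow> zc (sT T)"
  by (simp add: zc_def sT_def var_def mon_def)

definition Gtau :: "(xy, 'a::comm_ring_1) ser \<Rightarrow> (xy, 'a) ser \<Rightarrow> xy mon \<Rightarrow> 'a" where
  "Gtau t T w = (\<Sum>m\<in>Mb (deg w) - {lf Y}. t m * eval_mon (sT T) m w)"

lemma subst_sT_split:
  assumes T0: "T None = 0" and t1: "t (lf Y) = 1" and w: "w \<noteq> None"
  shows "subst (sT T) t w = T w + Gtau t T w"
proof -
  have lfin: "lf Y \<in> Mb (deg w)" using w deg_zero_iff[of w] by auto
  have "subst (sT T) t w = t (lf Y) * eval_mon (sT T) (lf Y) w + Gtau t T w"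
    unfolding Gtau_def subst_box[OF zc_sT[where T=T, OF T0] order.refl]
    by (rule sum.remove[OF finite_Mb lfin])
  then show ?thesis using t1 by (simp add: sT_def)
qed

lemma local_Gtau: "local_op (Gtau t)"
  unfolding local_op_def
proof (intro allI impI)
  fix u u' :: "(xy, 'a) ser" and w :: "xy mon"
  assume u0: "u None = 0" and u'0: "u' None = 0"
    and ag: "\<forall>w'. deg w' < deg w \<longrightarrow> ydeg w' \<le> ydeg w \<longrightarrow> u w' = u' w'"
  show "Gtau t u w = Gtau t u' w"
    unfolding Gtau_def
  proof (rule sum.cong[OF refl])
    fix m :: "xy mon" assume m: "m \<in> Mb (deg w) - {lf Y}"
    show "t m * eval_mon (sT u) m w = t m * eval_mon (sT u') m w"
    proof (cases m rule: mon_cases)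
      case 1 then show ?thesis by simp
    next
      case (2 v) then show ?thesis using m by (cases v) (auto simp: sT_def)
    next
      case (3 a b)
      have "eval_tree (sT u) (MNode a b) w = eval_tree (sT u') (MNode a b) w"
        by (rule eval_local_node[OF zc_sT[where T=u, OF u0] zc_sT[where T=u', OF u'0]]) (use ag in \<open>auto simp: sT_def\<close>)
      then show ?thesis using 3 by simp
    qed
  qed
qed

lemma subst_sT_None: "T None = 0 \<Longrightarrow> subst (sT T) t None = t None"
  by (rule subst_None[OF zc_sT])

lemma tau_inv_spec:
  fixes e :: "(unit, 'a::comm_ring_1) ser"
  assumes t0: "tau e None = 0" and t1: "tau e (lf Y) = 1"
  shows "tau_inv e None = 0 \<and> subst (sT (tau_inv e)) (tau e) = var Y"
proof -
  have iff: "(T None = 0 \<and> subst (sT T) (tau e) = var Y) \<longleftrightarrow> (T None = 0 \<and> (\<forall>w. w \<noteq> None \<longrightarrow> T w + Gtau (tau e) T w = var Y w))"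
    for T :: "(xy, 'a) ser"
  proof
    assume "T None = 0 \<and> subst (sT T) (tau e) = var Y"
    then show "T None = 0 \<and> (\<forall>w. w \<noteq> None \<longrightarrow> T w + Gtau (tau e) T w = var Y w)"
      using subst_sT_split[where T=T and t="tau e", OF _ t1] by auto
  next
    assume A: "T None = 0 \<and> (\<forall>w. w \<noteq> None \<longrightarrow> T w + Gtau (tau e) T w = var Y w)"
    have "subst (sT T) (tau e) w = var Y w" for w
    proof (cases "w = None")
      case True then show ?thesis using A subst_sT_None[of T "tau e"] t0 by (simp add: var_def mon_def)
    next
      case False then show ?thesis using A subst_sT_split[of T "tau e" w] t1 by simp
    qed
    then show "T None = 0 \<and> subst (sT T) (tau e) = var Y" using A by auto
  qed
  have "\<exists>!T. T None = 0 \<and> subst (sT T) (tau e) = var Y"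
    unfolding iff by (rule rec_ex1[OF local_Gtau])
  then have "tau_inv e None = 0 \<and> subst (sT (tau_inv e)) (tau e) = var Y"
    unfolding tau_inv_def sT_def[abs_def] by (rule theI')
  then show ?thesis .
qed


lemma left_cancel:
  assumes f1: "f None = 1" and h: "ser_mult f h = (\<lambda>_. 0)"
  shows "h w = (0::'a::comm_ring_1)"
proof (induction "deg w" arbitrary: w rule: less_induct)
  case less
  have hN: "h None = 0" using fun_cong[OF h, of None] f1 by (simp add: ser_mult_None)
  show ?case
  proof (cases w rule: mon_cases)
    case 1 then show ?thesis using hN by simp
  next
    case (2 v) then show ?thesis using fun_cong[OF h, of w] f1 hN by (simp add: ser_mult_leaf)
  next
    case (3 a b)
    have "deg (Some b) < deg w" using 3 tdeg_pos[of a] by (simp add: deg_def)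
    then have "h (Some b) = 0" by (rule less)
    then show ?thesis using fun_cong[OF h, of w] f1 hN 3 by (simp add: ser_mult_node)
  qed
qed

lemma ser_mult_y1:
  assumes "\<And>w'. ydeg w' \<le> 1 \<Longrightarrow> g w' = g' w'" and "ydeg w \<le> 1"
  shows "ser_mult f g w = ser_mult f g' w"
  unfolding ser_mult_dec
proof (rule sum.cong[OF refl])
  fix q assume "q \<in> dec w"
  then have "ydeg (snd q) \<le> 1" using dec_ydeg[of "fst q" "snd q" w] assms(2) by auto
  then show "(case q of (u, v) \<Rightarrow> f u * g v) = (case q of (u, v) \<Rightarrow> f u * g' v)"
    using assms(1) by (simp add: case_prod_beta)
qed

lemma ser_mult_add_right: "ser_mult f (\<lambda>w. g w + h w) w = ser_mult f g w + ser_mult f h w"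
  by (simp add: ser_mult_dec distrib_left sum.distrib case_prod_beta)

lemma eval_ydeg:
  assumes "\<And>v w'. \<sigma> v w' \<noteq> 0 \<Longrightarrow> ydeg_tree (MLeaf v) \<le> ydeg w'"
  shows "(eval_tree \<sigma> t w :: 'a::comm_ring_1) \<noteq> 0 \<Longrightarrow> ydeg_tree t \<le> ydeg w"
proof (induction t arbitrary: w)
  case (MLeaf v) then show ?case using assms by simp
next
  case (MNode a b)
  from MNode.prems obtain q where q: "q \<in> dec w" "(case q of (u, v) \<Rightarrow> eval_tree \<sigma> a u * eval_tree \<sigma> b v) \<noteq> (0::'a)"
    unfolding eval_tree.simps ser_mult_dec by (rule sum.not_neutral_contains_not_neutral)
  obtain u v where q': "q = (u, v)" by fastforce
  have "eval_tree \<sigma> a u \<noteq> (0::'a)" "eval_tree \<sigma> b v \<noteq> (0::'a)" using q(2) q' by auto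
  then have "ydeg_tree a \<le> ydeg u" "ydeg_tree b \<le> ydeg v" using MNode.IH by auto
  then show ?case using dec_ydeg[of u v w] q(1) q' by simp
qed

definition rnY :: "unit mon \<Rightarrow> xy mon" where "rnY = map_option (map_ntree (\<lambda>_. Y))"

lemma ydeg_tree_mapY: "ydeg_tree (map_ntree (\<lambda>_. Y) t) = tdeg t" by (induction t) auto

lemma ydeg_rnY: "ydeg (rnY m) = deg m"
  by (cases m) (auto simp: rnY_def ydeg_def deg_def ydeg_tree_mapY)

lemma eval_mon_Y: "(eval_mon (\<lambda>_. var Y) m :: (xy, 'a::comm_ring_1) ser) = mon (rnY m)"
  by (cases m) (simp_all add: eval_tree_const_var rnY_def)


context
  fixes e :: "(unit, 'a::comm_ring_1) ser"
  assumes nb: "normalized_base e"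
begin

lemma e_gl: "coprod e = tensor e e" using nb by (simp add: normalized_base_def base_for_logs_def group_like_def)
lemma e_None: "e None = 1" using nb by (simp add: normalized_base_def base_for_logs_def group_like_def counit_def)
lemma e_lf: "e (lf ()) = 1" using nb by (simp add: normalized_base_def var_def mon_def)

abbreviation "E \<equiv> Ebase e"
definition "W = apply_base e (\<lambda>w. var X w + var Y w)"
definition "D = ds_at0 W"

lemma E_None: "E None = 1" by (simp add: Ebase_None e_None)

lemma tau_eq: "tau e = ldiv E D" by (simp add: tau_def Ebase_def D_def W_def)

lemma ET: "ser_mult E (tau e) = D"
proof
  fix w show "ser_mult E (tau e) w = D w"
    unfolding tau_eq by (rule ldiv_right_inv[OF Ebase_group_like[OF e_gl] E_None])
qed

lemma zc_xy: "zc (\<lambda>_. (\<lambda>w. var X w + var Y w) :: (xy, 'a) ser)"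
  by (simp add: zc_def var_def mon_def)

lemma rho_W: "subst rho W = E"
proof -
  have "subst rho W = subst (\<lambda>_. subst rho (\<lambda>w. var X w + var Y w)) e"
    unfolding W_def apply_base_def by (rule subst_comp[OF zc_rho zc_xy])
  also have "subst rho (\<lambda>w. var X w + var Y w) = (var X :: (xy, 'a) ser)"
    by (simp add: subst_add subst_var[OF zc_rho] rho_def)
  finally show ?thesis by (simp add: Ebase_def apply_base_def)
qed

lemma W_y0: "ydeg w = 0 \<Longrightarrow> W w = E w"
  using fun_cong[OF rho_W, of w] by (simp add: subst_rho)

lemma E_y: "ydeg w \<noteq> 0 \<Longrightarrow> E w = 0"
  using fun_cong[OF rho_W, of w] by (simp add: subst_rho)

lemma Mb1_unit: "Mb 1 = {None, lf ()}"
proof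
  show "Mb 1 \<subseteq> {None, lf ()}"
  proof
    fix m :: "unit mon" assume "m \<in> Mb 1"
    then show "m \<in> {None, lf ()}"
    proof (cases m rule: mon_cases)
      case (3 a b)
      then show ?thesis using \<open>m \<in> Mb 1\<close> tdeg_pos[of a] tdeg_pos[of b] by (simp add: deg_def)
    qed auto
  qed
qed auto

lemma W_lfY: "W (lf Y) = 1"
proof -
  have "W (lf Y) = (\<Sum>m\<in>Mb 1. e m * eval_mon (\<lambda>_. \<lambda>w. var X w + var Y w) m (lf Y))"
    unfolding W_def apply_base_def by (rule subst_box[OF zc_xy]) simp
  also have "\<dots> = 1" by (simp only: Mb1_unit) (simp add: e_lf var_def mon_def)
  finally show ?thesis .
qed

lemma D_None: "D None = 0" by (simp add: D_def ds_at0_def)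
lemma D_lfY: "D (lf Y) = 1" by (simp add: D_def ds_at0_def ydeg_def W_lfY)
lemma D_y: "ydeg w \<noteq> 1 \<Longrightarrow> D w = 0" by (simp add: D_def ds_at0_def)

lemma tau_None: "tau e None = 0"
  using fun_cong[OF ET, of None] by (simp add: ser_mult_None E_None D_None)

lemma tau_lfY: "tau e (lf Y) = 1"
  using fun_cong[OF ET, of "lf Y"] by (simp add: ser_mult_leaf E_None D_lfY tau_None)

lemma tau_y0: "ydeg w = 0 \<Longrightarrow> tau e w = 0"
proof -
  have rE: "subst rho E = E"
    by (rule ext) (simp add: subst_rho E_y)
  have rD: "subst rho D = (\<lambda>_. 0)"
    by (rule ext) (simp add: subst_rho D_y)
  have "ser_mult E (subst rho (tau e)) = (\<lambda>_. 0)"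
    using arg_cong[OF ET, of "subst rho"] unfolding subst_mult[OF zc_rho] rE rD .
  then have "subst rho (tau e) w = 0" by (rule left_cancel[where f=E and h="subst rho (tau e)", OF E_None])
  then show "ydeg w = 0 \<Longrightarrow> tau e w = 0" by (simp add: subst_rho)
qed

abbreviation "TI \<equiv> tau_inv e"

lemma TI_None: "TI None = 0" using tau_inv_spec[OF tau_None tau_lfY] by blast
lemma TI_eq: "subst (sT TI) (tau e) = var Y" using tau_inv_spec[OF tau_None tau_lfY] by blast

lemma TI_y0: "ydeg w = 0 \<Longrightarrow> TI w = 0"
proof -
  define T0 where "T0 = subst rho TI"
  have T00: "T0 None = 0" by (simp add: T0_def subst_rho TI_None)
  have sT0: "(\<lambda>v. subst rho (sT TI v)) = sT T0"
    by (rule ext) (simp add: sT_def T0_def subst_var[OF zc_rho] rho_def)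
  have "subst rho (subst (sT TI) (tau e)) = subst (sT T0) (tau e)"
    by (simp add: subst_comp[OF zc_rho zc_sT[where T=TI, OF TI_None]] sT0)
  moreover have "subst rho (var Y :: (xy, 'a) ser) = (\<lambda>_. 0)"
    by (simp add: subst_var[OF zc_rho] rho_def)
  ultimately have A: "subst (sT T0) (tau e) = (\<lambda>_. 0)" using TI_eq by simp
  have sT00: "sT (\<lambda>_. 0) = (rho :: xy \<Rightarrow> (xy, 'a) ser)" by (rule ext) (simp add: sT_def rho_def)
  have B: "subst (sT (\<lambda>_. 0)) (tau e) = (\<lambda>_. (0::'a))"
    unfolding sT00 by (rule ext) (simp add: subst_rho tau_y0)
  have "T0 = (\<lambda>_. 0)"
  proof (rule rec_unique[where u=T0 and u'="\<lambda>_. 0", OF local_Gtau[of "tau e"] T00])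
    show "(0::'a) = 0" ..
    fix w :: "xy mon" assume w: "w \<noteq> None"
    have "T0 w + Gtau (tau e) T0 w = subst (sT T0) (tau e) w"
      using subst_sT_split[where T=T0 and t="tau e", OF T00 tau_lfY w] by simp
    also have "\<dots> = subst (sT (\<lambda>_. 0)) (tau e) w" using A B by simp
    also have "\<dots> = 0 + Gtau (tau e) (\<lambda>_. 0) w"
      using subst_sT_split[where T="\<lambda>_. 0" and t="tau e", OF _ tau_lfY w] by simp
    finally show "T0 w + Gtau (tau e) T0 w = 0 + Gtau (tau e) (\<lambda>_. 0) w" .
  qed
  then have "subst rho TI w = 0" unfolding T0_def by simp
  then show "ydeg w = 0 \<Longrightarrow> TI w = 0" by (simp add: subst_rho)
qed

definition "V = (\<lambda>w. var X w + TI w)"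

lemma zc_sTI: "zc (sT TI)" by (rule zc_sT[where T=TI, OF TI_None])

lemma apply_V: "apply_base e V = subst (sT TI) W"
proof -
  have "subst (sT TI) W = subst (\<lambda>_. subst (sT TI) (\<lambda>w. var X w + var Y w)) e"
    unfolding W_def apply_base_def by (rule subst_comp[OF zc_sTI zc_xy])
  also have "subst (sT TI) (\<lambda>w. var X w + var Y w) = V"
    by (simp add: subst_add subst_var[OF zc_sTI] sT_def V_def)
  finally show ?thesis by (simp add: apply_base_def)
qed

definition "R2 = (\<lambda>w. if 2 \<le> ydeg w then W w else 0)"

lemma W_split: "W = (\<lambda>w. E w + (\<lambda>w. D w + R2 w) w)"
proof
  fix w
  show "W w = E w + (\<lambda>w. D w + R2 w) w"
  proof (cases "ydeg w = 0")
    case True then show ?thesis by (simp add: W_y0 D_y R2_def)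
  next
    case False
    then show ?thesis
      by (cases "ydeg w = 1") (auto simp: E_y D_y R2_def D_def ds_at0_def)
  qed
qed

lemma sTI_E: "subst (sT TI) E = E"
proof -
  have "subst (sT TI) E = subst (\<lambda>_. subst (sT TI) (var X)) e"
    unfolding Ebase_def apply_base_def by (rule subst_comp[OF zc_sTI zc_const_var])
  then show ?thesis by (simp add: subst_var[OF zc_sTI] sT_def Ebase_def apply_base_def)
qed

lemma sTI_D: "subst (sT TI) D = ser_mult E (var Y)"
  unfolding ET[symmetric] subst_mult[OF zc_sTI] sTI_E TI_eq ..

lemma sTI_R2: "ydeg w \<le> 1 \<Longrightarrow> subst (sT TI) R2 w = 0"
proof -
  assume w: "ydeg w \<le> 1"
  have lv: "ydeg_tree (MLeaf v) \<le> ydeg w'" if "sT TI v w' \<noteq> 0" for v w'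
  proof (cases v)
    case Y
    then have "TI w' \<noteq> 0" using that by (simp add: sT_def)
    then have "ydeg w' \<noteq> 0" using TI_y0 by blast
    then show ?thesis using Y by simp
  qed simp
  show ?thesis unfolding subst_def
  proof (rule sum.neutral, rule ballI)
    fix m :: "xy mon" assume "m \<in> {m. deg m \<le> deg w}"
    show "R2 m * eval_mon (sT TI) m w = 0"
    proof (cases "R2 m = 0")
      case False
      then have m2: "2 \<le> ydeg m" by (simp add: R2_def split: if_splits)
      then obtain t where t: "m = Some t" by (cases m) auto
      have "eval_tree (sT TI) t w = 0"
      proof (rule ccontr)
        assume "eval_tree (sT TI) t w \<noteq> 0"
        then have "ydeg_tree t \<le> ydeg w" using eval_ydeg[where \<sigma>="sT TI" and t=t and w=w] lv by blast
        then show False using m2 w t by (simp add: ydeg_def)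
      qed
      then show ?thesis using t by simp
    qed simp
  qed
qed

lemma apply_V_y1: "ydeg w \<le> 1 \<Longrightarrow> apply_base e V w = E w + ser_mult E (var Y) w"
proof -
  assume w: "ydeg w \<le> 1"
  have "apply_base e V w = subst (sT TI) W w" by (simp add: apply_V)
  also have "\<dots> = subst (sT TI) E w + (subst (sT TI) D w + subst (sT TI) R2 w)"
    by (subst W_split) (simp add: subst_add)
  also have "\<dots> = E w + ser_mult E (var Y) w"
    by (simp add: sTI_E sTI_D sTI_R2[OF w])
  finally show ?thesis .
qed

lemma Ey_y1: "ydeg w \<le> 1 \<Longrightarrow> apply_base e (var Y) w = mon None w + var Y w"
proof -
  assume w: "ydeg w \<le> 1"
  have pt: "e m * mon (rnY m) w = (if m = None then mon None w else 0) + (if m = lf () then var Y w else 0)" for m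
  proof (cases m rule: mon_cases)
    case 1 then show ?thesis by (simp add: rnY_def e_None)
  next
    case (2 v) then show ?thesis by (simp add: rnY_def e_lf var_def)
  next
    case (3 a b)
    then have "ydeg (rnY m) \<ge> 2" using tdeg_pos[of a] tdeg_pos[of b] by (simp add: ydeg_rnY deg_def)
    then have "rnY m \<noteq> w" using w by auto
    then show ?thesis using 3 by (simp add: mon_def)
  qed
  have "apply_base e (var Y) w = (\<Sum>m\<in>Mb (deg w + 1). e m * mon (rnY m) w)"
    unfolding apply_base_def by (rule trans[OF subst_box[OF zc_const_var]]) (simp_all add: eval_mon_Y)
  also have "\<dots> = (\<Sum>m\<in>Mb (deg w + 1). if m = (None :: unit mon) then mon None w else 0) + (\<Sum>m\<in>Mb (deg w + 1). if m = lf () then var Y w else 0)"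
    by (simp only: pt sum.distrib)
  also have "\<dots> = mon None w + var Y w" by simp
  finally show ?thesis .
qed

lemma EEy_y1: "ydeg w \<le> 1 \<Longrightarrow> ser_mult E (apply_base e (var Y)) w = E w + ser_mult E (var Y) w"
proof -
  assume w: "ydeg w \<le> 1"
  have "ser_mult E (apply_base e (var Y)) w = ser_mult E (\<lambda>w. mon None w + var Y w) w"
    by (rule ser_mult_y1[OF Ey_y1 w])
  also have "\<dots> = ser_mult E (mon None) w + ser_mult E (var Y) w"
    by (rule ser_mult_add_right)
  also have "\<dots> = E w + ser_mult E (var Y) w" by (simp add: ser_mult_unit_right)
  finally show ?thesis .
qed

lemma main_aux:
  "O_y2 (\<lambda>w. log_base e (ser_mult (apply_base e (var X)) (apply_base e (var Y))) w - var X w - tau_inv e w)"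
proof -
  define f where "f = ser_mult E (apply_base e (var Y))"
  define U where "U = log_base e f"
  have f0: "f None = 1"
    by (simp add: f_def ser_mult_None E_None apply_base_None var_def mon_def e_None)
  have U: "U None = 0 \<and> apply_base e U = f"
    unfolding U_def by (rule log_base_spec[where e=e and f=f, OF e_None e_lf f0])
  have V0: "V None = 0" by (simp add: V_def TI_None var_def mon_def)
  have UV: "U w = V w" if "ydeg w \<le> 1" for w
  proof (rule log_base_unique_y1[where e=e and u=U and u'=V, OF e_lf _ V0 _ that])
    show "U None = 0" using U by blast
    fix w :: "xy mon" assume w: "ydeg w \<le> 1"
    have "apply_base e U w = f w" using U by simp
    also have "\<dots> = E w + ser_mult E (var Y) w" unfolding f_def by (rule EEy_y1[OF w])
    also have "\<dots> = apply_base e V w" by (rule apply_V_y1[OF w, symmetric])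
    finally show "apply_base e U w = apply_base e V w" .
  qed
  show ?thesis
    unfolding O_y2_def
  proof (intro allI impI)
    fix w :: "xy mon" assume "ydeg w < 2"
    then have "U w = V w" by (intro UV) simp
    then show "log_base e (ser_mult (apply_base e (var X)) (apply_base e (var Y))) w - var X w - tau_inv e w = 0"
      by (simp add: U_def f_def Ebase_def V_def)
  qed
qed

end

theorem mainTheorem5:
  fixes e :: "(unit, 'a::field_char_0) ser"
  assumes "normalized_base e"
  shows "O_y2 (\<lambda>w. log_base e (ser_mult (apply_base e (var X)) (apply_base e (var Y))) w
                  - var X w - tau_inv e w)"
  by (rule main_aux[OF assms])


end
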